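(* Let $n,k$ be positive integers with $k\ge 2$ and $n\ge k^3+1$, and let $\ell$ be an integer with $0\le \ell\le k-1$. Then $$\vartheta(G(n,k,\{\ell\}))\ge \frac{\binom{k}{k-\ell}}{(k-\ell)(\ell+1)}(n-k).$$
   Context: For positive integers $n>k$ and $L\subseteq\{0,1,\dots,k-1\}$, the generalized Johnson graph $G(n,k,L)$ has vertex set $\binom{[n]}{k}$ (the $k$-subsets of $[n]=\{1,\dots,n\}$), with $A,B$ adjacent if and only if $|A\cap B|\notin L$. $\vartheta(G)$ is the Lovász theta function: $\vartheta(G)=\max\langle J,B\rangle$ over real symmetric positive semidefinite $B$ indexed by $V(G)$ with $\operatorname{tr}B=1$ and $B_{ij}=0$ for every edge $ij$, $J$ the all-ones matrix. *)

theory Defs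
  imports "HOL-Analysis.Analysis"
begin

text \<open>Real symmetric matrices indexed by a finite vertex set V are represented as
  functions B :: 'v => 'v => real (entries outside V are ignored).\<close>

definition psd_on :: "'v set \<Rightarrow> ('v \<Rightarrow> 'v \<Rightarrow> real) \<Rightarrow> bool" where
  "psd_on V B \<longleftrightarrow> (\<forall>i\<in>V. \<forall>j\<in>V. B i j = B j i) \<and>
     (\<forall>x :: 'v \<Rightarrow> real. (\<Sum>i\<in>V. \<Sum>j\<in>V. x i * B i j * x j) \<ge> 0)"

definition lovasz_theta :: "'v set \<Rightarrow> ('v \<Rightarrow> 'v \<Rightarrow> bool) \<Rightarrow> real" where
  "lovasz_theta V E = Sup {(\<Sum>i\<in>V. \<Sum>j\<in>V. B i j) | B.
      psd_on V B \<and> (\<Sum>i\<in>V. B i i) = 1 \<and> (\<forall>i\<in>V. \<forall>j\<in>V. E i j \<longrightarrow> B i j = 0)}"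

definition johnson_verts :: "nat \<Rightarrow> nat \<Rightarrow> nat set set" where
  "johnson_verts n k = {A. A \<subseteq> {1..n} \<and> card A = k}"

definition gen_johnson_adj :: "nat set \<Rightarrow> nat set \<Rightarrow> nat set \<Rightarrow> bool" where
  "gen_johnson_adj L A B \<longleftrightarrow> A \<noteq> B \<and> card (A \<inter> B) \<notin> L"

end

theory Submission
  imports Defs
begin

definition lev :: "nat \<Rightarrow> nat \<Rightarrow> nat set set" where
  "lev n t = {T. T \<subseteq> {1..n} \<and> card T = t}"

definition Dop :: "nat \<Rightarrow> (nat set \<Rightarrow> real) \<Rightarrow> nat set \<Rightarrow> real" where
  "Dop n f T = (\<Sum>u\<in>{1..n} - T. f (insert u T))"

definition Uop :: "(nat set \<Rightarrow> real) \<Rightarrow> nat set \<Rightarrow> real" where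
  "Uop g A = (\<Sum>v\<in>A. g (A - {v}))"

definition Lop :: "nat \<Rightarrow> (nat set \<Rightarrow> real) \<Rightarrow> nat set \<Rightarrow> real" where
  "Lop n f = Uop (Dop n f)"

definition eqon :: "nat \<Rightarrow> nat \<Rightarrow> (nat set \<Rightarrow> real) \<Rightarrow> (nat set \<Rightarrow> real) \<Rightarrow> bool" where
  "eqon n t f g \<longleftrightarrow> (\<forall>T\<in>lev n t. f T = g T)"

lemma finite_lev: "finite (lev n t)"
proof -
  have "lev n t \<subseteq> Pow {1..n}" by (auto simp: lev_def)
  then show ?thesis by (rule finite_subset) simp
qed

lemma lev_finite: "T \<in> lev n t \<Longrightarrow> finite T"
  by (auto simp: lev_def intro: finite_subset)

lemma lev_card_le: "T \<in> lev n t \<Longrightarrow> t \<le> n"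
  unfolding lev_def using card_mono[of "{1..n}" T] by auto

lemma lev_remove: "T \<in> lev n (Suc t) \<Longrightarrow> v \<in> T \<Longrightarrow> T - {v} \<in> lev n t"
  unfolding lev_def by (auto simp: card_Diff_singleton)

lemma lev_insert: "T \<in> lev n t \<Longrightarrow> u \<in> {1..n} - T \<Longrightarrow> insert u T \<in> lev n (Suc t)"
  unfolding lev_def using finite_subset[of T "{1..n}"] by auto

lemma lev_remove_insert: "T \<in> lev n t \<Longrightarrow> v \<in> T \<Longrightarrow> u \<in> {1..n} - (T - {v}) \<Longrightarrow>
   insert u (T - {v}) \<in> lev n t"
proof -
  assume a: "T \<in> lev n t" "v \<in> T" "u \<in> {1..n} - (T - {v})"
  from a(1) have f: "finite T" by (rule lev_finite)
  have "card (insert u (T - {v})) = card (T - {v}) + 1" using a f by auto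
  also have "\<dots> = card T" using a f card_Diff_singleton[of v T] card_gt_0_iff[of T] by fastforce
  finally show ?thesis using a unfolding lev_def by auto
qed

lemma comm:
  assumes T: "T \<in> lev n t"
  shows "Dop n (Uop h) T = Lop n h T + (real n - 2 * real t) * h T"
proof -
  have fT: "finite T" and sT: "T \<subseteq> {1..n}" and cT: "card T = t" using T lev_finite[OF T]
    by (auto simp: lev_def)
  have tn: "t \<le> n" using lev_card_le[OF T] .
  define X where "X = (\<Sum>u\<in>{1..n} - T. \<Sum>v\<in>T. h (insert u (T - {v})))"
  have "Dop n (Uop h) T = (\<Sum>u\<in>{1..n} - T. h T + (\<Sum>v\<in>T. h (insert u (T - {v}))))"
    unfolding Dop_def Uop_def
  proof (rule sum.cong[OF refl])
    fix u assume u: "u \<in> {1..n} - T"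
    have "(\<Sum>v\<in>insert u T. h (insert u T - {v})) = h (insert u T - {u}) + (\<Sum>v\<in>T. h (insert u T - {v}))"
      using u fT by (simp add: sum.insert)
    also have "insert u T - {u} = T" using u by auto
    also have "(\<Sum>v\<in>T. h (insert u T - {v})) = (\<Sum>v\<in>T. h (insert u (T - {v})))"
    proof (rule sum.cong[OF refl])
      fix v assume "v \<in> T"
      then have "insert u T - {v} = insert u (T - {v})" using u by auto
      then show "h (insert u T - {v}) = h (insert u (T - {v}))" by simp
    qed
    finally show "(\<Sum>v\<in>insert u T. h (insert u T - {v})) = h T + (\<Sum>v\<in>T. h (insert u (T - {v})))" .
  qed
  also have "\<dots> = real (n - t) * h T + X"
    unfolding X_def sum.distrib using card_Diff_subset[OF fT sT] cT by simp
  finally have 1: "Dop n (Uop h) T = real (n - t) * h T + X" .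
  have "Lop n h T = (\<Sum>v\<in>T. h T + (\<Sum>u\<in>{1..n} - T. h (insert u (T - {v}))))"
    unfolding Lop_def Dop_def Uop_def
  proof (rule sum.cong[OF refl])
    fix v assume v: "v \<in> T"
    have e: "{1..n} - (T - {v}) = insert v ({1..n} - T)" using v sT by auto
    have "(\<Sum>u\<in>{1..n} - (T - {v}). h (insert u (T - {v}))) =
        h (insert v (T - {v})) + (\<Sum>u\<in>{1..n} - T. h (insert u (T - {v})))"
      unfolding e using v by (intro sum.insert) auto
    also have "insert v (T - {v}) = T" using v by auto
    finally show "(\<Sum>u\<in>{1..n} - (T - {v}). h (insert u (T - {v}))) =
        h T + (\<Sum>u\<in>{1..n} - T. h (insert u (T - {v})))" .
  qed
  also have "\<dots> = real t * h T + X"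
    unfolding X_def sum.distrib using cT by (simp add: sum.swap[of _ T])
  finally have 2: "Lop n h T = real t * h T + X" .
  show ?thesis using 1 2 tn by (simp add: of_nat_diff algebra_simps)
qed

lemma eqon_refl[simp]: "eqon n t f f" by (simp add: eqon_def)
lemma eqon_sym: "eqon n t f g \<Longrightarrow> eqon n t g f" by (simp add: eqon_def)
lemma eqon_trans: "eqon n t f g \<Longrightarrow> eqon n t g h \<Longrightarrow> eqon n t f h" by (simp add: eqon_def)
lemma eqonD: "eqon n t f g \<Longrightarrow> T \<in> lev n t \<Longrightarrow> f T = g T" by (simp add: eqon_def)

lemma D_eqon: "eqon n (Suc t) f g \<Longrightarrow> eqon n t (Dop n f) (Dop n g)"
  unfolding eqon_def Dop_def by (auto intro!: sum.cong lev_insert)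

lemma U_eqon: "eqon n t f g \<Longrightarrow> eqon n (Suc t) (Uop f) (Uop g)"
  unfolding eqon_def Uop_def by (auto intro!: sum.cong lev_remove)

lemma L_eqon: "eqon n t f g \<Longrightarrow> eqon n t (Lop n f) (Lop n g)"
  unfolding eqon_def Lop_def Uop_def Dop_def by (auto intro!: sum.cong lev_remove_insert)

lemma Dop_add: "Dop n (\<lambda>A. f A + g A) T = Dop n f T + Dop n g T"
  by (simp add: Dop_def sum.distrib)
lemma Dop_diff: "Dop n (\<lambda>A. f A - g A) T = Dop n f T - Dop n g T"
  by (simp add: Dop_def sum_subtractf)
lemma Dop_cmult: "Dop n (\<lambda>A. c * f A) T = c * Dop n f T"
  by (simp add: Dop_def sum_distrib_left)
lemma Dop_sum: "Dop n (\<lambda>A. \<Sum>i\<in>I. F i A) T = (\<Sum>i\<in>I. Dop n (F i) T)"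
  by (simp add: Dop_def sum.swap[of _ I])
lemma Uop_add: "Uop (\<lambda>A. f A + g A) T = Uop f T + Uop g T"
  by (simp add: Uop_def sum.distrib)
lemma Uop_diff: "Uop (\<lambda>A. f A - g A) T = Uop f T - Uop g T"
  by (simp add: Uop_def sum_subtractf)
lemma Uop_cmult: "Uop (\<lambda>A. c * f A) T = c * Uop f T"
  by (simp add: Uop_def sum_distrib_left)
lemma Uop_sum: "Uop (\<lambda>A. \<Sum>i\<in>I. F i A) T = (\<Sum>i\<in>I. Uop (F i) T)"
  by (simp add: Uop_def sum.swap[of _ I])
lemma Uop_zero: "Uop (\<lambda>A. 0) = (\<lambda>A. 0)"
  by (simp add: Uop_def fun_eq_iff)
lemma Dop_zero: "Dop n (\<lambda>A. 0) = (\<lambda>A. 0)"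
  by (simp add: Dop_def fun_eq_iff)

lemma Lop_add: "Lop n (\<lambda>A. f A + g A) T = Lop n f T + Lop n g T"
proof -
  have "Dop n (\<lambda>A. f A + g A) = (\<lambda>T. Dop n f T + Dop n g T)" by (simp add: fun_eq_iff Dop_add)
  then show ?thesis by (simp add: Lop_def Uop_add)
qed
lemma Lop_diff: "Lop n (\<lambda>A. f A - g A) T = Lop n f T - Lop n g T"
proof -
  have "Dop n (\<lambda>A. f A - g A) = (\<lambda>T. Dop n f T - Dop n g T)" by (simp add: fun_eq_iff Dop_diff)
  then show ?thesis by (simp add: Lop_def Uop_diff)
qed
lemma Lop_cmult: "Lop n (\<lambda>A. c * f A) T = c * Lop n f T"
proof -
  have "Dop n (\<lambda>A. c * f A) = (\<lambda>T. c * Dop n f T)" by (simp add: fun_eq_iff Dop_cmult)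
  then show ?thesis by (simp add: Lop_def Uop_cmult)
qed
lemma Lop_sum: "Lop n (\<lambda>A. \<Sum>i\<in>I. F i A) T = (\<Sum>i\<in>I. Lop n (F i) T)"
proof -
  have "Dop n (\<lambda>A. \<Sum>i\<in>I. F i A) = (\<lambda>T. \<Sum>i\<in>I. Dop n (F i) T)" by (simp add: fun_eq_iff Dop_sum)
  then show ?thesis by (simp add: Lop_def Uop_sum)
qed

fun prodop :: "nat \<Rightarrow> real list \<Rightarrow> (nat set \<Rightarrow> real) \<Rightarrow> nat set \<Rightarrow> real" where
  "prodop n [] f = f"
| "prodop n (\<theta> # R) f = prodop n R (\<lambda>A. Lop n f A - \<theta> * f A)"

lemma prodop_eqon: "eqon n t f g \<Longrightarrow> eqon n t (prodop n R f) (prodop n R g)"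
proof (induction R arbitrary: f g)
  case Nil then show ?case by simp
next
  case (Cons \<theta> R)
  have "eqon n t (\<lambda>A. Lop n f A - \<theta> * f A) (\<lambda>A. Lop n g A - \<theta> * g A)"
    using L_eqon[OF Cons.prems] Cons.prems by (simp add: eqon_def)
  then show ?case by (simp add: Cons.IH)
qed

lemma intertw:
  "eqon n (Suc t) (prodop n (map (\<lambda>x. x + (real n - 2 * real t)) R) (Uop h)) (Uop (prodop n R h))"
proof (induction R arbitrary: h)
  case Nil then show ?case by simp
next
  case (Cons \<theta> R)
  define c where "c = real n - 2 * real t"
  define h' where "h' = (\<lambda>A. Lop n h A - \<theta> * h A)"
  have key: "eqon n (Suc t) (\<lambda>A. Lop n (Uop h) A - (\<theta> + c) * Uop h A) (Uop h')"
    unfolding eqon_def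
  proof
    fix T assume T: "T \<in> lev n (Suc t)"
    have "eqon n t (Dop n (Uop h)) (\<lambda>S. Lop n h S + c * h S)"
      unfolding eqon_def c_def using comm by blast
    from U_eqon[OF this] T have "Uop (Dop n (Uop h)) T = Uop (\<lambda>S. Lop n h S + c * h S) T"
      by (simp add: eqon_def)
    also have "\<dots> = Uop (Lop n h) T + c * Uop h T" by (simp add: Uop_add Uop_cmult)
    finally have "Lop n (Uop h) T = Uop (Lop n h) T + c * Uop h T" by (simp add: Lop_def)
    moreover have "Uop h' T = Uop (Lop n h) T - \<theta> * Uop h T"
      unfolding h'_def by (simp add: Uop_diff Uop_cmult)
    ultimately show "Lop n (Uop h) T - (\<theta> + c) * Uop h T = Uop h' T" by (simp add: algebra_simps)
  qed
  have "prodop n (map (\<lambda>x. x + c) (\<theta> # R)) (Uop h) =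
        prodop n (map (\<lambda>x. x + c) R) (\<lambda>A. Lop n (Uop h) A - (\<theta> + c) * Uop h A)" by simp
  moreover have "eqon n (Suc t) (prodop n (map (\<lambda>x. x + c) R) (\<lambda>A. Lop n (Uop h) A - (\<theta> + c) * Uop h A))
      (prodop n (map (\<lambda>x. x + c) R) (Uop h'))"
    by (rule prodop_eqon[OF key])
  moreover have "eqon n (Suc t) (prodop n (map (\<lambda>x. x + c) R) (Uop h')) (Uop (prodop n R h'))"
    using Cons.IH[of h'] by (simp add: c_def)
  ultimately show ?case unfolding c_def h'_def by (auto intro: eqon_trans)
qed

fun Rl :: "nat \<Rightarrow> nat \<Rightarrow> real list" where
  "Rl n 0 = [0]"
| "Rl n (Suc t) = 0 # map (\<lambda>x. x + (real n - 2 * real t)) (Rl n t)"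

lemma lev0: "lev n 0 = {{}}"
  unfolding lev_def by (auto simp: card_eq_0_iff intro: finite_subset)

lemma minpoly: "eqon n t (prodop n (Rl n t) g) (\<lambda>A. 0)"
proof (induction t arbitrary: g)
  case 0
  have "Lop n g {} = 0" by (simp add: Lop_def Uop_def)
  then show ?case by (simp add: eqon_def lev0)
next
  case (Suc t)
  have e: "(\<lambda>A. Lop n g A - 0 * g A) = Uop (Dop n g)" by (simp add: fun_eq_iff Lop_def)
  have "eqon n (Suc t) (prodop n (Rl n (Suc t)) g) (Uop (prodop n (Rl n t) (Dop n g)))"
    using intertw[of n t "Rl n t" "Dop n g"] by (simp add: Lop_def)
  moreover have "eqon n (Suc t) (Uop (prodop n (Rl n t) (Dop n g))) (Uop (\<lambda>A. 0))"
    by (rule U_eqon[OF Suc.IH])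
  ultimately show ?case by (simp add: Uop_zero eqon_trans)
qed

definition th :: "nat \<Rightarrow> nat \<Rightarrow> nat \<Rightarrow> real" where
  "th n t j = (real t - real j) * (real n - real t - real j + 1)"

lemma th_Suc: "th n (Suc t) j = th n t j + (real n - 2 * real t)"
  by (simp add: th_def algebra_simps)

lemma set_Rl: "set (Rl n t) = th n t ` {0..t}"
proof (induction t)
  case 0 then show ?case by (simp add: th_def)
next
  case (Suc t)
  have "set (Rl n (Suc t)) = insert 0 ((\<lambda>x. x + (real n - 2 * real t)) ` th n t ` {0..t})"
    using Suc by simp
  also have "(\<lambda>x. x + (real n - 2 * real t)) ` th n t ` {0..t} = th n (Suc t) ` {0..t}"
    by (auto simp: image_image th_Suc)
  also have "insert 0 (th n (Suc t) ` {0..t}) = th n (Suc t) ` {0..Suc t}"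
  proof -
    have "{0..Suc t} = insert (Suc t) {0..t}" by auto
    moreover have "th n (Suc t) (Suc t) = 0" by (simp add: th_def)
    ultimately show ?thesis by simp
  qed
  finally show ?case .
qed

lemma distinct_Rl: "2 * t \<le> n \<Longrightarrow> distinct (Rl n t)"
proof (induction t)
  case 0 then show ?case by simp
next
  case (Suc t)
  have d: "distinct (Rl n t)" using Suc by simp
  have inj: "inj_on (\<lambda>x. x + (real n - 2 * real t)) (set (Rl n t))" by (auto simp: inj_on_def)
  have "0 \<notin> set (map (\<lambda>x. x + (real n - 2 * real t)) (Rl n t))"
  proof
    assume "0 \<in> set (map (\<lambda>x. x + (real n - 2 * real t)) (Rl n t))"
    then obtain j where j: "j \<le> t" "th n t j + (real n - 2 * real t) = 0"
      by (auto simp: set_Rl)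
    then have "th n (Suc t) j = 0" by (simp add: th_Suc)
    moreover have "real (Suc t) - real j > 0" using j by simp
    moreover have "real n - real (Suc t) - real j + 1 > 0" using j Suc.prems by simp
    ultimately show False by (simp add: th_def)
  qed
  then show ?case using d inj by (simp add: distinct_map)
qed

lemma decomp:
  assumes "distinct R" "eqon n k (prodop n R x) (\<lambda>A. 0)"
  shows "\<exists>X. eqon n k x (\<lambda>A. \<Sum>\<theta>\<in>set R. X \<theta> A) \<and>
             (\<forall>\<theta>\<in>set R. eqon n k (Lop n (X \<theta>)) (\<lambda>A. \<theta> * X \<theta> A))"
  using assms
proof (induction R arbitrary: x)
  case Nil then show ?case by simp
next
  case (Cons \<theta> R)
  define y where "y = (\<lambda>A. Lop n x A - \<theta> * x A)"
  have "eqon n k (prodop n R y) (\<lambda>A. 0)" using Cons.prems by (simp add: y_def)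
  then obtain Y where Y: "eqon n k y (\<lambda>A. \<Sum>\<mu>\<in>set R. Y \<mu> A)"
      "\<forall>\<mu>\<in>set R. eqon n k (Lop n (Y \<mu>)) (\<lambda>A. \<mu> * Y \<mu> A)"
    using Cons.IH Cons.prems by auto
  have th_notin: "\<theta> \<notin> set R" using Cons.prems by simp
  define X where "X = (\<lambda>\<mu>. if \<mu> = \<theta> then (\<lambda>A. x A - (\<Sum>\<mu>'\<in>set R. Y \<mu>' A / (\<mu>' - \<theta>)))
                          else (\<lambda>A. Y \<mu> A / (\<mu> - \<theta>)))"
  have XR: "\<And>\<mu>. \<mu> \<in> set R \<Longrightarrow> X \<mu> = (\<lambda>A. Y \<mu> A / (\<mu> - \<theta>))"
    using th_notin by (auto simp: X_def)
  have sumR: "(\<Sum>\<mu>\<in>set R. X \<mu> A) = (\<Sum>\<mu>\<in>set R. Y \<mu> A / (\<mu> - \<theta>))" for A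
    by (rule sum.cong) (auto simp: XR)
  have 1: "eqon n k x (\<lambda>A. \<Sum>\<mu>\<in>set (\<theta> # R). X \<mu> A)"
    unfolding eqon_def using th_notin by (simp add: sumR) (simp add: X_def)
  have 2: "eqon n k (Lop n (X \<mu>)) (\<lambda>A. \<mu> * X \<mu> A)" if mu: "\<mu> \<in> set (\<theta> # R)" for \<mu>
  proof (cases "\<mu> = \<theta>")
    case False
    then have m: "\<mu> \<in> set R" using mu by simp
    have "\<mu> - \<theta> \<noteq> 0" using False by simp
    then show ?thesis unfolding XR[OF m] eqon_def
      using Y(2) m by (auto simp: Lop_cmult[where c="1 / (\<mu> - \<theta>)", simplified] eqon_def)
  next
    case True
    show ?thesis unfolding True eqon_def
    proof
      fix T assume T: "T \<in> lev n k"
      have Xt: "X \<theta> = (\<lambda>A. x A - (\<Sum>\<mu>'\<in>set R. Y \<mu>' A / (\<mu>' - \<theta>)))" by (simp add: X_def)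
      have "Lop n (X \<theta>) T = Lop n x T - (\<Sum>\<mu>'\<in>set R. Lop n (\<lambda>A. Y \<mu>' A / (\<mu>' - \<theta>)) T)"
        unfolding Xt by (simp add: Lop_diff Lop_sum)
      also have "(\<Sum>\<mu>'\<in>set R. Lop n (\<lambda>A. Y \<mu>' A / (\<mu>' - \<theta>)) T) = (\<Sum>\<mu>'\<in>set R. \<mu>' * Y \<mu>' T / (\<mu>' - \<theta>))"
      proof (rule sum.cong[OF refl])
        fix \<mu>' assume m: "\<mu>' \<in> set R"
        have "Lop n (\<lambda>A. Y \<mu>' A / (\<mu>' - \<theta>)) T = Lop n (Y \<mu>') T / (\<mu>' - \<theta>)"
          using Lop_cmult[of n "1 / (\<mu>' - \<theta>)" "Y \<mu>'" T] by simp
        also have "\<dots> = \<mu>' * Y \<mu>' T / (\<mu>' - \<theta>)" using Y(2) m T by (simp add: eqon_def)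
        finally show "Lop n (\<lambda>A. Y \<mu>' A / (\<mu>' - \<theta>)) T = \<mu>' * Y \<mu>' T / (\<mu>' - \<theta>)" .
      qed
      finally have a: "Lop n (X \<theta>) T = Lop n x T - (\<Sum>\<mu>'\<in>set R. \<mu>' * Y \<mu>' T / (\<mu>' - \<theta>))" .
      have yT: "y T = (\<Sum>\<mu>'\<in>set R. Y \<mu>' T)" using Y(1) T by (simp add: eqon_def)
      have "(\<Sum>\<mu>'\<in>set R. \<mu>' * Y \<mu>' T / (\<mu>' - \<theta>)) - \<theta> * (\<Sum>\<mu>'\<in>set R. Y \<mu>' T / (\<mu>' - \<theta>))
            = (\<Sum>\<mu>'\<in>set R. Y \<mu>' T)"
        unfolding sum_distrib_left sum_subtractf[symmetric]
      proof (rule sum.cong[OF refl])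
        fix \<mu>' assume "\<mu>' \<in> set R"
        then have ne: "\<mu>' - \<theta> \<noteq> 0" using th_notin by auto
        have "\<mu>' * Y \<mu>' T / (\<mu>' - \<theta>) - \<theta> * (Y \<mu>' T / (\<mu>' - \<theta>)) = (\<mu>' - \<theta>) * (Y \<mu>' T / (\<mu>' - \<theta>))"
          by (simp add: left_diff_distrib diff_divide_distrib)
        also have "\<dots> = Y \<mu>' T" using ne by simp
        finally show "\<mu>' * Y \<mu>' T / (\<mu>' - \<theta>) - \<theta> * (Y \<mu>' T / (\<mu>' - \<theta>)) = Y \<mu>' T" .
      qed
      then show "Lop n (X \<theta>) T = \<theta> * X \<theta> T"
        using a yT unfolding y_def Xt by (simp add: algebra_simps)
    qed
  qed
  show ?case using 1 2 by blast
qed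

definition ip :: "nat \<Rightarrow> nat \<Rightarrow> (nat set \<Rightarrow> real) \<Rightarrow> (nat set \<Rightarrow> real) \<Rightarrow> real" where
  "ip n t f g = (\<Sum>T\<in>lev n t. f T * g T)"

lemma ip_sym: "ip n t f g = ip n t g f"
  by (simp add: ip_def mult.commute)

lemma ip_eqon1: "eqon n t f f' \<Longrightarrow> ip n t f g = ip n t f' g"
  by (simp add: ip_def eqon_def)
lemma ip_eqon2: "eqon n t g g' \<Longrightarrow> ip n t f g = ip n t f g'"
  by (simp add: ip_def eqon_def)

lemma ip_nonneg: "ip n t f f \<ge> 0"
  by (simp add: ip_def sum_nonneg)

lemma ip_sum1: "ip n t (\<lambda>A. \<Sum>i\<in>I. F i A) g = (\<Sum>i\<in>I. ip n t (F i) g)"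
  by (simp add: ip_def sum_distrib_right sum.swap[of _ I])
lemma ip_sum2: "ip n t f (\<lambda>A. \<Sum>i\<in>I. F i A) = (\<Sum>i\<in>I. ip n t f (F i))"
  by (simp add: ip_def sum_distrib_left sum.swap[of _ I])
lemma ip_cmult2: "ip n t f (\<lambda>A. c * g A) = c * ip n t f g"
  by (simp add: ip_def sum_distrib_left algebra_simps)

lemma adjoint: "ip n (Suc t) (Uop h) g = ip n t h (Dop n g)"
proof -
  have "ip n (Suc t) (Uop h) g = (\<Sum>A\<in>lev n (Suc t). \<Sum>v\<in>A. h (A - {v}) * g A)"
    by (simp add: ip_def Uop_def sum_distrib_right)
  also have "\<dots> = (\<Sum>(A, v)\<in>Sigma (lev n (Suc t)) (\<lambda>A. A). h (A - {v}) * g A)"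
    by (rule sum.Sigma) (auto simp: finite_lev lev_finite)
  also have "\<dots> = (\<Sum>(T, u)\<in>Sigma (lev n t) (\<lambda>T. {1..n} - T). h T * g (insert u T))"
  proof (rule sum.reindex_bij_witness[where i="\<lambda>(T, u). (insert u T, u)" and j="\<lambda>(A, v). (A - {v}, v)"])
    fix a assume "a \<in> Sigma (lev n (Suc t)) (\<lambda>A. A)"
    then obtain A v where a: "a = (A, v)" "A \<in> lev n (Suc t)" "v \<in> A" by auto
    then show "(case (case a of (A, v) \<Rightarrow> (A - {v}, v)) of (T, u) \<Rightarrow> (insert u T, u)) = a"
      by auto
    have "A \<subseteq> {1..n}" using a by (simp add: lev_def)
    then show "(case a of (A, v) \<Rightarrow> (A - {v}, v)) \<in> Sigma (lev n t) (\<lambda>T. {1..n} - T)"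
      using a lev_remove[OF a(2,3)] by auto
    show "(case (case a of (A, v) \<Rightarrow> (A - {v}, v)) of (T, u) \<Rightarrow> h T * g (insert u T)) =
        (case a of (A, v) \<Rightarrow> h (A - {v}) * g A)"
      using a by (simp add: insert_absorb)
  next
    fix b assume "b \<in> Sigma (lev n t) (\<lambda>T. {1..n} - T)"
    then obtain T u where b: "b = (T, u)" "T \<in> lev n t" "u \<in> {1..n} - T" by auto
    then show "(case (case b of (T, u) \<Rightarrow> (insert u T, u)) of (A, v) \<Rightarrow> (A - {v}, v)) = b"
      by auto
    show "(case b of (T, u) \<Rightarrow> (insert u T, u)) \<in> Sigma (lev n (Suc t)) (\<lambda>A. A)"
      using b lev_insert[OF b(2,3)] by auto
  qed
  also have "\<dots> = (\<Sum>T\<in>lev n t. \<Sum>u\<in>{1..n} - T. h T * g (insert u T))"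
    by (rule sum.Sigma[symmetric]) (auto simp: finite_lev)
  also have "\<dots> = ip n t h (Dop n g)"
    by (simp add: ip_def Dop_def sum_distrib_left)
  finally show ?thesis .
qed

lemma selfadj: "ip n (Suc t) (Lop n f) g = ip n t (Dop n f) (Dop n g)"
  unfolding Lop_def by (rule adjoint)

lemma orth:
  assumes "eqon n (Suc t) (Lop n f) (\<lambda>A. \<theta> * f A)" "eqon n (Suc t) (Lop n g) (\<lambda>A. \<mu> * g A)" "\<theta> \<noteq> \<mu>"
  shows "ip n (Suc t) f g = 0"
proof -
  have "ip n (Suc t) (Lop n f) g = ip n (Suc t) (Lop n g) f"
    using selfadj[of n t f g] selfadj[of n t g f] ip_sym[of n t "Dop n f" "Dop n g"] by simp
  then have "\<theta> * ip n (Suc t) f g = \<mu> * ip n (Suc t) g f"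
    using ip_eqon1[OF assms(1), of g] ip_eqon1[OF assms(2), of f]
    by (simp add: ip_def sum_distrib_left mult.assoc)
  then have "(\<theta> - \<mu>) * ip n (Suc t) f g = 0" by (simp add: ip_sym algebra_simps)
  then show ?thesis using assms(3) by simp
qed

lemma adjoint_iter: "s \<le> t \<Longrightarrow> ip n (t - s) ((Dop n ^^ s) f) h = ip n t f ((Uop ^^ s) h)"
proof (induction s arbitrary: h)
  case 0 then show ?case by simp
next
  case (Suc s)
  have e: "Suc (t - Suc s) = t - s" using Suc.prems by simp
  have "ip n (t - Suc s) ((Dop n ^^ Suc s) f) h = ip n (t - Suc s) h (Dop n ((Dop n ^^ s) f))"
    by (simp add: ip_sym)
  also have "\<dots> = ip n (t - s) (Uop h) ((Dop n ^^ s) f)"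
    using adjoint[of n "t - Suc s" h "(Dop n ^^ s) f"] e by simp
  also have "\<dots> = ip n t f ((Uop ^^ s) (Uop h))"
    using Suc.IH[of "Uop h"] Suc.prems by (simp add: ip_sym)
  also have "(Uop ^^ s) (Uop h) = (Uop ^^ Suc s) h" by (simp add: funpow_Suc_right del: funpow.simps)
  finally show ?case .
qed

lemma Dpow_eqon: "eqon n (t + s) f g \<Longrightarrow> eqon n t ((Dop n ^^ s) f) ((Dop n ^^ s) g)"
proof (induction s arbitrary: t)
  case 0 then show ?case by simp
next
  case (Suc s)
  have "eqon n (Suc t) ((Dop n ^^ s) f) ((Dop n ^^ s) g)" using Suc.IH[of "Suc t"] Suc.prems by simp
  then show ?case by (simp add: D_eqon)
qed

lemma Upow_eqon: "eqon n t f g \<Longrightarrow> eqon n (t + s) ((Uop ^^ s) f) ((Uop ^^ s) g)"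
proof (induction s)
  case 0 then show ?case by simp
next
  case (Suc s)
  then show ?case by (simp add: U_eqon)
qed

lemma Dop_sum_fun: "Dop n (\<lambda>A. \<Sum>i\<in>I. F i A) = (\<lambda>T. \<Sum>i\<in>I. Dop n (F i) T)"
  by (simp add: fun_eq_iff Dop_sum)
lemma Uop_sum_fun: "Uop (\<lambda>A. \<Sum>i\<in>I. F i A) = (\<lambda>T. \<Sum>i\<in>I. Uop (F i) T)"
  by (simp add: fun_eq_iff Uop_sum)
lemma Uop_cmult_fun: "Uop (\<lambda>A. c * F A) = (\<lambda>T. c * Uop F T)"
  by (simp add: fun_eq_iff Uop_cmult)

lemma Dpow_sum: "(Dop n ^^ s) (\<lambda>A. \<Sum>i\<in>I. F i A) = (\<lambda>A. \<Sum>i\<in>I. (Dop n ^^ s) (F i) A)"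
proof (induction s)
  case 0 then show ?case by simp
next
  case (Suc s) then show ?case by (simp add: Dop_sum_fun)
qed

lemma Upow_sum: "(Uop ^^ s) (\<lambda>A. \<Sum>i\<in>I. F i A) = (\<lambda>A. \<Sum>i\<in>I. (Uop ^^ s) (F i) A)"
proof (induction s)
  case 0 then show ?case by simp
next
  case (Suc s) then show ?case by (simp add: Uop_sum_fun)
qed

lemma Upow_cmult: "(Uop ^^ s) (\<lambda>A. c * F A) = (\<lambda>A. c * (Uop ^^ s) F A)"
proof (induction s)
  case 0 then show ?case by simp
next
  case (Suc s) then show ?case by (simp add: Uop_cmult_fun)
qed

fun gg :: "nat \<Rightarrow> nat \<Rightarrow> nat \<Rightarrow> real \<Rightarrow> real" where
  "gg n 0 t \<theta> = 1"
| "gg n (Suc s) t \<theta> = \<theta> * gg n s (t - 1) (\<theta> - (real n - 2 * real t + 2))"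

lemma eig:
  "s \<le> t \<Longrightarrow> eqon n t (Lop n v) (\<lambda>A. \<theta> * v A) \<Longrightarrow>
   eqon n t ((Uop ^^ s) ((Dop n ^^ s) v)) (\<lambda>A. gg n s t \<theta> * v A)"
proof (induction s arbitrary: t \<theta> v)
  case 0 then show ?case by simp
next
  case (Suc s)
  then obtain t' where t: "t = Suc t'" by (cases t) auto
  define w where "w = Dop n v"
  define \<theta>' where "\<theta>' = \<theta> - (real n - 2 * real t + 2)"
  have weig: "eqon n t' (Lop n w) (\<lambda>A. \<theta>' * w A)"
    unfolding eqon_def
  proof
    fix T assume T: "T \<in> lev n t'"
    have "Dop n (Uop w) T = Lop n w T + (real n - 2 * real t') * w T" by (rule comm[OF T])
    moreover have "Uop w = Lop n v" by (simp add: w_def Lop_def)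
    moreover have "Dop n (Lop n v) T = Dop n (\<lambda>A. \<theta> * v A) T"
      using D_eqon[of n t' "Lop n v" "\<lambda>A. \<theta> * v A"] Suc.prems(2) T t by (simp add: eqon_def)
    moreover have "Dop n (\<lambda>A. \<theta> * v A) T = \<theta> * w T" by (simp add: w_def Dop_cmult)
    ultimately show "Lop n w T = \<theta>' * w T" unfolding \<theta>'_def t by (simp add: algebra_simps)
  qed
  have IH: "eqon n t' ((Uop ^^ s) ((Dop n ^^ s) w)) (\<lambda>A. gg n s t' \<theta>' * w A)"
    using Suc.IH[OF _ weig] Suc.prems t by simp
  have e: "(Uop ^^ Suc s) ((Dop n ^^ Suc s) v) = Uop ((Uop ^^ s) ((Dop n ^^ s) w))"
  proof -
    have "(Dop n ^^ Suc s) v = (Dop n ^^ s) (Dop n v)" by (simp only: funpow_Suc_right o_apply)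
    then show ?thesis by (simp add: w_def)
  qed
  have "eqon n t (Uop ((Uop ^^ s) ((Dop n ^^ s) w))) (Uop (\<lambda>A. gg n s t' \<theta>' * w A))"
    using U_eqon[OF IH] t by simp
  moreover have "Uop (\<lambda>A. gg n s t' \<theta>' * w A) = (\<lambda>A. gg n s t' \<theta>' * Lop n v A)"
    by (simp add: fun_eq_iff Uop_cmult w_def Lop_def)
  moreover have "eqon n t (\<lambda>A. gg n s t' \<theta>' * Lop n v A) (\<lambda>A. gg n (Suc s) t \<theta> * v A)"
    using Suc.prems(2) t by (simp add: eqon_def \<theta>'_def)
  ultimately show ?case unfolding e by (metis eqon_trans)
qed

lemma gg_closed:
  "j \<le> t \<Longrightarrow> t + j \<le> n \<Longrightarrow>
   gg n s t (th n t j) = (fact s)^2 * real ((t - j) choose s) * real ((n - t - j + s) choose s)"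
proof (induction s arbitrary: t)
  case 0 then show ?case by simp
next
  case (Suc s)
  show ?case
  proof (cases "j = t")
    case True
    then show ?thesis by (simp add: th_def)
  next
    case False
    then obtain t' where t: "t = Suc t'" and jt: "j \<le> t'" using Suc.prems by (cases t) auto
    define a where "a = t' - j"
    define M where "M = n - t - j"
    have ta: "t - j = Suc a" using t jt by (simp add: a_def)
    have nM: "n - t' - j = Suc M" using Suc.prems t by (simp add: M_def)
    have th_eq: "th n t j = real (Suc a) * real (Suc M)"
      using Suc.prems t jt unfolding th_def a_def M_def by (simp add: of_nat_diff)
    have shift: "th n t j - (real n - 2 * real t + 2) = th n t' j"
      unfolding th_def t by (simp add: algebra_simps)
    have IH0: "gg n s t' (th n t' j) = (fact s)^2 * real ((t' - j) choose s) * real ((n - t' - j + s) choose s)"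
      by (rule Suc.IH) (use jt Suc.prems t in auto)
    have IH: "gg n s t' (th n t' j) = (fact s)^2 * real (a choose s) * real ((Suc M + s) choose s)"
      using IH0 unfolding nM a_def[symmetric] .
    have b1: "Suc s * (Suc a choose Suc s) = Suc a * (a choose s)" by (rule Suc_times_binomial)
    have b2: "Suc s * (Suc (s + M) choose Suc s) = Suc M * (Suc (s + M) choose s)"
      by (rule Suc_times_binomial_add)
    have "gg n (Suc s) t (th n t j) = th n t j * gg n s t' (th n t' j)"
      using t shift by simp
    also have "\<dots> = (fact s)^2 * (real (Suc a) * real (a choose s)) * (real (Suc M) * real ((Suc M + s) choose s))"
      unfolding IH th_eq by (simp add: algebra_simps)
    also have "real (Suc a) * real (a choose s) = real (Suc s) * real (Suc a choose Suc s)"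
      using b1 by (metis of_nat_mult)
    also have "real (Suc M) * real ((Suc M + s) choose s) = real (Suc s) * real (Suc (s + M) choose Suc s)"
      using b2 by (metis of_nat_mult add.commute add_Suc)
    also have "(fact s)^2 * (real (Suc s) * real (Suc a choose Suc s)) * (real (Suc s) * real (Suc (s + M) choose Suc s))
       = (fact (Suc s))^2 * real (Suc a choose Suc s) * real (Suc (s + M) choose Suc s)"
      by (simp add: power2_eq_square algebra_simps)
    finally show ?thesis using ta by (simp add: M_def add.commute)
  qed
qed

lemma alt_identity:
  assumes "m \<le> k"
  shows "(\<Sum>t\<in>{l..k}. (-1)^(t-l) * real (t choose l) * real (m choose t)) = (if m = l then 1 else 0)"
proof (cases "m < l")
  case True
  then have "\<forall>t\<in>{l..k}. (-1)^(t-l) * real (t choose l) * real (m choose t) = 0" by simp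
  then show ?thesis using True by (simp add: sum.neutral)
next
  case False
  then have lm: "l \<le> m" by simp
  have "(\<Sum>t\<in>{l..k}. (-1)^(t-l) * real (t choose l) * real (m choose t)) =
        (\<Sum>t\<in>{l..m}. (-1)^(t-l) * real (t choose l) * real (m choose t))"
    by (rule sum.mono_neutral_right) (use assms in auto)
  also have "\<dots> = (\<Sum>t\<in>{l..m}. (-1)^(t-l) * real (m choose l) * real ((m - l) choose (t - l)))"
  proof (rule sum.cong[OF refl])
    fix t assume t: "t \<in> {l..m}"
    have "(m choose t) * (t choose l) = (m choose l) * ((m - l) choose (t - l))"
      using t by (intro choose_mult) auto
    then have "real (t choose l) * real (m choose t) = real (m choose l) * real ((m - l) choose (t - l))"
      by (metis mult.commute of_nat_mult)
    then show "(-1)^(t-l) * real (t choose l) * real (m choose t) =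
         (-1)^(t-l) * real (m choose l) * real ((m - l) choose (t - l))" by (simp add: mult.assoc)
  qed
  also have "\<dots> = (\<Sum>i\<in>{0..m-l}. (-1)^i * real (m choose l) * real ((m - l) choose i))"
  proof -
    have "{l..m} = {0 + l..(m - l) + l}" using lm by simp
    then show ?thesis by (simp only: sum.shift_bounds_cl_nat_ivl) simp
  qed
  also have "\<dots> = real (m choose l) * (\<Sum>i\<le>m-l. (-1)^i * real ((m - l) choose i))"
    by (simp add: sum_distrib_left atLeast0AtMost algebra_simps)
  also have "\<dots> = (if m = l then 1 else 0)"
  proof (cases "m = l")
    case True then show ?thesis by simp
  next
    case False
    then have "m - l > 0" using lm by simp
    from choose_alternating_sum[OF this, where 'a=real] False show ?thesis by simp
  qed
  finally show ?thesis .
qed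

lemma Dpow_formula:
  "T \<subseteq> {1..n} \<Longrightarrow> (Dop n ^^ s) x T = fact s * (\<Sum>A\<in>{A\<in>lev n (card T + s). T \<subseteq> A}. x A)"
proof (induction s arbitrary: T)
  case 0
  have fT: "finite T" using 0 finite_subset by blast
  have "{A\<in>lev n (card T). T \<subseteq> A} = {T}"
  proof
    show "{A\<in>lev n (card T). T \<subseteq> A} \<subseteq> {T}"
    proof
      fix A assume A: "A \<in> {A\<in>lev n (card T). T \<subseteq> A}"
      then have A1: "A \<in> lev n (card T)" and TA: "T \<subseteq> A" by simp_all
      have fA: "finite A" by (rule lev_finite[OF A1])
      have cA: "card T = card A" using A1 by (simp add: lev_def)
      have "T = A" by (rule card_subset_eq[OF fA TA cA])
      then show "A \<in> {T}" by simp
    qed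
    show "{T} \<subseteq> {A\<in>lev n (card T). T \<subseteq> A}" using 0 by (simp add: lev_def)
  qed
  then show ?case by simp
next
  case (Suc s)
  have fT: "finite T" using Suc.prems finite_subset by blast
  define m where "m = card T + Suc s"
  have "(Dop n ^^ Suc s) x T = (\<Sum>u\<in>{1..n} - T. (Dop n ^^ s) x (insert u T))"
    by (simp add: Dop_def)
  also have "\<dots> = (\<Sum>u\<in>{1..n} - T. fact s * (\<Sum>A\<in>{A\<in>lev n m. insert u T \<subseteq> A}. x A))"
  proof (rule sum.cong[OF refl])
    fix u assume u: "u \<in> {1..n} - T"
    have "card (insert u T) + s = m" using u fT by (simp add: m_def)
    then show "(Dop n ^^ s) x (insert u T) = fact s * (\<Sum>A\<in>{A\<in>lev n m. insert u T \<subseteq> A}. x A)"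
      using Suc.IH[of "insert u T"] Suc.prems u by simp
  qed
  also have "\<dots> = fact s * (\<Sum>u\<in>{1..n} - T. \<Sum>A\<in>lev n m. if insert u T \<subseteq> A then x A else 0)"
    by (simp add: sum_distrib_left sum.inter_filter[OF finite_lev])
  also have "\<dots> = fact s * (\<Sum>A\<in>lev n m. \<Sum>u\<in>{1..n} - T. if insert u T \<subseteq> A then x A else 0)"
    by (subst sum.swap) (rule refl)
  also have "\<dots> = fact s * (\<Sum>A\<in>lev n m. if T \<subseteq> A then real (Suc s) * x A else 0)"
  proof -
    have "(\<Sum>u\<in>{1..n} - T. if insert u T \<subseteq> A then x A else 0) = (if T \<subseteq> A then real (Suc s) * x A else 0)"
      if A: "A \<in> lev n m" for A
    proof -
      have fA: "finite A" using A by (rule lev_finite)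
      have "(\<Sum>u\<in>{1..n} - T. if insert u T \<subseteq> A then x A else 0) =
            (\<Sum>u\<in>{u\<in>{1..n} - T. insert u T \<subseteq> A}. x A)"
        by (rule sum.inter_filter[symmetric]) simp
      also have "\<dots> = real (card {u\<in>{1..n} - T. insert u T \<subseteq> A}) * x A" by simp
      also have "{u\<in>{1..n} - T. insert u T \<subseteq> A} = (if T \<subseteq> A then A - T else {})"
        using A by (auto simp: lev_def)
      also have "real (card (if T \<subseteq> A then A - T else {})) * x A = (if T \<subseteq> A then real (Suc s) * x A else 0)"
        using A fT fA by (auto simp: lev_def m_def card_Diff_subset)
      finally show ?thesis .
    qed
    then show ?thesis by (intro arg_cong[where f="\<lambda>z. fact s * z"] sum.cong) auto
  qed
  also have "\<dots> = fact (Suc s) * (\<Sum>A\<in>{A\<in>lev n m. T \<subseteq> A}. x A)"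
    by (simp add: sum.inter_filter[OF finite_lev, symmetric] sum_distrib_left algebra_simps)
  finally show ?case by (simp add: m_def)
qed

definition Nt :: "nat \<Rightarrow> nat \<Rightarrow> nat \<Rightarrow> (nat set \<Rightarrow> real) \<Rightarrow> real" where
  "Nt n k t x = (\<Sum>T\<in>lev n t. (\<Sum>A\<in>{A\<in>lev n k. T \<subseteq> A}. x A)^2)"

lemma Nt_ip:
  assumes "t \<le> k"
  shows "Nt n k t x = ip n t ((Dop n ^^ (k - t)) x) ((Dop n ^^ (k - t)) x) / (fact (k - t))^2"
proof -
  have "ip n t ((Dop n ^^ (k - t)) x) ((Dop n ^^ (k - t)) x) =
        (\<Sum>T\<in>lev n t. (fact (k - t))^2 * (\<Sum>A\<in>{A\<in>lev n k. T \<subseteq> A}. x A)^2)"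
    unfolding ip_def
  proof (rule sum.cong[OF refl])
    fix T assume T: "T \<in> lev n t"
    then have "T \<subseteq> {1..n}" "card T + (k - t) = k" using assms by (auto simp: lev_def)
    then show "(Dop n ^^ (k - t)) x T * (Dop n ^^ (k - t)) x T =
         (fact (k - t))^2 * (\<Sum>A\<in>{A\<in>lev n k. T \<subseteq> A}. x A)^2"
      using Dpow_formula[of T n "k - t" x] by (simp add: power2_eq_square)
  qed
  then show ?thesis by (simp add: Nt_def sum_distrib_left[symmetric])
qed

lemma Nt_pairs:
  "Nt n k t x = (\<Sum>A\<in>lev n k. \<Sum>B\<in>lev n k. real (card (A \<inter> B) choose t) * (x A * x B))"
proof -
  have c: "real (card (A \<inter> B) choose t) = (\<Sum>T\<in>lev n t. if T \<subseteq> A \<and> T \<subseteq> B then 1 else 0)"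
    if A: "A \<in> lev n k" for A B
  proof -
    have fin: "finite (A \<inter> B)" using lev_finite[OF A] by simp
    have "{T. T \<subseteq> A \<inter> B \<and> card T = t} = {T\<in>lev n t. T \<subseteq> A \<and> T \<subseteq> B}"
      using A by (auto simp: lev_def)
    then have "card (A \<inter> B) choose t = card {T\<in>lev n t. T \<subseteq> A \<and> T \<subseteq> B}"
      using n_subsets[OF fin, of t] by simp
    then show ?thesis by (simp add: sum.If_cases[OF finite_lev] Int_def)
  qed
  have "(\<Sum>A\<in>lev n k. \<Sum>B\<in>lev n k. real (card (A \<inter> B) choose t) * (x A * x B)) =
        (\<Sum>A\<in>lev n k. \<Sum>B\<in>lev n k. \<Sum>T\<in>lev n t. if T \<subseteq> A \<and> T \<subseteq> B then x A * x B else 0)"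
    by (intro sum.cong refl) (simp add: c sum_distrib_right, rule sum.cong, auto)
  also have "\<dots> = (\<Sum>T\<in>lev n t. \<Sum>A\<in>lev n k. \<Sum>B\<in>lev n k. if T \<subseteq> A \<and> T \<subseteq> B then x A * x B else 0)"
  proof -
    have "(\<Sum>A\<in>lev n k. \<Sum>B\<in>lev n k. \<Sum>T\<in>lev n t. if T \<subseteq> A \<and> T \<subseteq> B then x A * x B else 0) =
          (\<Sum>A\<in>lev n k. \<Sum>T\<in>lev n t. \<Sum>B\<in>lev n k. if T \<subseteq> A \<and> T \<subseteq> B then x A * x B else 0)"
      by (rule sum.cong[OF refl], rule sum.swap)
    also have "\<dots> = (\<Sum>T\<in>lev n t. \<Sum>A\<in>lev n k. \<Sum>B\<in>lev n k. if T \<subseteq> A \<and> T \<subseteq> B then x A * x B else 0)"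
      by (rule sum.swap)
    finally show ?thesis .
  qed
  also have "\<dots> = Nt n k t x"
    unfolding Nt_def
  proof (rule sum.cong[OF refl])
    fix T assume "T \<in> lev n t"
    define F where "F = {A\<in>lev n k. T \<subseteq> A}"
    have "(\<Sum>A\<in>F. x A)^2 = (\<Sum>A\<in>F. \<Sum>B\<in>F. x A * x B)"
      by (simp add: power2_eq_square sum_product)
    also have "\<dots> = (\<Sum>A\<in>lev n k. if T \<subseteq> A then (\<Sum>B\<in>F. x A * x B) else 0)"
      unfolding F_def by (rule sum.inter_filter[OF finite_lev])
    also have "\<dots> = (\<Sum>A\<in>lev n k. \<Sum>B\<in>lev n k. if T \<subseteq> A \<and> T \<subseteq> B then x A * x B else 0)"
    proof (rule sum.cong[OF refl])
      fix A assume "A \<in> lev n k"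
      have "(\<Sum>B\<in>F. x A * x B) = (\<Sum>B\<in>lev n k. if T \<subseteq> B then x A * x B else 0)"
        unfolding F_def by (rule sum.inter_filter[OF finite_lev])
      then show "(if T \<subseteq> A then (\<Sum>B\<in>F. x A * x B) else 0) =
          (\<Sum>B\<in>lev n k. if T \<subseteq> A \<and> T \<subseteq> B then x A * x B else 0)"
        by (cases "T \<subseteq> A") simp_all
    qed
    finally show "(\<Sum>A\<in>lev n k. \<Sum>B\<in>lev n k. if T \<subseteq> A \<and> T \<subseteq> B then x A * x B else 0) =
        (\<Sum>A\<in>{A\<in>lev n k. T \<subseteq> A}. x A)^2" unfolding F_def by simp
  qed
  finally show ?thesis by simp
qed

definition Qf :: "nat \<Rightarrow> nat \<Rightarrow> nat \<Rightarrow> (nat set \<Rightarrow> real) \<Rightarrow> real" where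
  "Qf n k l x = (\<Sum>A\<in>lev n k. \<Sum>B\<in>lev n k. (if card (A \<inter> B) = l then x A * x B else 0))"

lemma Qf_expand:
  "Qf n k l x = (\<Sum>t\<in>{l..k}. (-1)^(t-l) * real (t choose l) * Nt n k t x)"
proof -
  have "Qf n k l x = (\<Sum>A\<in>lev n k. \<Sum>B\<in>lev n k. \<Sum>t\<in>{l..k}. (-1)^(t-l) * real (t choose l) *
          (real (card (A \<inter> B) choose t) * (x A * x B)))"
    unfolding Qf_def
  proof (intro sum.cong refl)
    fix A B assume A: "A \<in> lev n k" and B: "B \<in> lev n k"
    have "card (A \<inter> B) \<le> k" using A lev_finite[OF A] card_mono[of A "A \<inter> B"] by (auto simp: lev_def)
    then have "(\<Sum>t\<in>{l..k}. (-1)^(t-l) * real (t choose l) * real (card (A \<inter> B) choose t)) =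
        (if card (A \<inter> B) = l then 1 else 0)" by (rule alt_identity)
    then have "(if card (A \<inter> B) = l then x A * x B else 0) =
        (\<Sum>t\<in>{l..k}. (-1)^(t-l) * real (t choose l) * real (card (A \<inter> B) choose t)) * (x A * x B)"
      by simp
    then show "(if card (A \<inter> B) = l then x A * x B else 0) = (\<Sum>t\<in>{l..k}. (-1)^(t-l) * real (t choose l) *
          (real (card (A \<inter> B) choose t) * (x A * x B)))"
      by (simp add: sum_distrib_right mult.assoc)
  qed
  also have "\<dots> = (\<Sum>t\<in>{l..k}. (-1)^(t-l) * real (t choose l) * (\<Sum>A\<in>lev n k. \<Sum>B\<in>lev n k.
          real (card (A \<inter> B) choose t) * (x A * x B)))"
  proof -
    have "(\<Sum>A\<in>lev n k. \<Sum>B\<in>lev n k. \<Sum>t\<in>{l..k}. (-1)^(t-l) * real (t choose l) *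
          (real (card (A \<inter> B) choose t) * (x A * x B))) =
          (\<Sum>A\<in>lev n k. \<Sum>t\<in>{l..k}. \<Sum>B\<in>lev n k. (-1)^(t-l) * real (t choose l) *
          (real (card (A \<inter> B) choose t) * (x A * x B)))"
      by (rule sum.cong[OF refl], rule sum.swap)
    also have "\<dots> = (\<Sum>t\<in>{l..k}. \<Sum>A\<in>lev n k. \<Sum>B\<in>lev n k. (-1)^(t-l) * real (t choose l) *
          (real (card (A \<inter> B) choose t) * (x A * x B)))"
      by (rule sum.swap)
    finally show ?thesis by (simp add: sum_distrib_left)
  qed
  also have "\<dots> = (\<Sum>t\<in>{l..k}. (-1)^(t-l) * real (t choose l) * Nt n k t x)"
    by (simp add: Nt_pairs)
  finally show ?thesis .
qed

lemma eqon_sum: "(\<And>i. i \<in> I \<Longrightarrow> eqon n t (F i) (G i)) \<Longrightarrow>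
   eqon n t (\<lambda>A. \<Sum>i\<in>I. F i A) (\<lambda>A. \<Sum>i\<in>I. G i A)"
  by (simp add: eqon_def)

lemma psd_main:
  fixes n k l :: nat and lam :: real and x :: "nat set \<Rightarrow> real"
  assumes k1: "1 \<le> k" and kn: "2 * k \<le> n"
    and Eb: "\<And>j. j \<le> k \<Longrightarrow> lam + (\<Sum>t\<in>{l..k}. (-1)^(t-l) * real (t choose l) *
               (real ((k - j) choose (k - t)) * real ((n - t - j) choose (k - t)))) \<ge> 0"
  shows "lam * ip n k x x + Qf n k l x \<ge> 0"
proof -
  obtain k' where k: "k = Suc k'" using k1 by (cases k) auto
  define S where "S = set (Rl n k)"
  have finS: "finite S" by (simp add: S_def)
  obtain X where hx: "eqon n k x (\<lambda>A. \<Sum>\<theta>\<in>S. X \<theta> A)"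
    and hX: "\<And>\<theta>. \<theta> \<in> S \<Longrightarrow> eqon n k (Lop n (X \<theta>)) (\<lambda>A. \<theta> * X \<theta> A)"
    using decomp[OF distinct_Rl[OF kn] minpoly[of n k x]] unfolding S_def by blast
  have orthX: "ip n k (X \<theta>) (X \<mu>) = 0" if "\<theta> \<in> S" "\<mu> \<in> S" "\<theta> \<noteq> \<mu>" for \<theta> \<mu>
    using orth[of n k' "X \<theta>" \<theta> "X \<mu>" \<mu>] hX that k by simp
  have ipX: "ip n k x (X \<mu>) = ip n k (X \<mu>) (X \<mu>)" if mu: "\<mu> \<in> S" for \<mu>
  proof -
    have "ip n k x (X \<mu>) = (\<Sum>\<theta>\<in>S. ip n k (X \<theta>) (X \<mu>))"
      using ip_eqon1[OF hx] by (simp add: ip_sum1)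
    also have "\<dots> = (\<Sum>\<theta>\<in>S. if \<theta> = \<mu> then ip n k (X \<mu>) (X \<mu>) else 0)"
      by (rule sum.cong) (auto simp: orthX mu)
    also have "\<dots> = ip n k (X \<mu>) (X \<mu>)" using finS mu by simp
    finally show ?thesis .
  qed
  have ipxx: "ip n k x x = (\<Sum>\<mu>\<in>S. ip n k (X \<mu>) (X \<mu>))"
  proof -
    have "ip n k x x = (\<Sum>\<mu>\<in>S. ip n k x (X \<mu>))"
      using ip_eqon2[OF hx] by (simp add: ip_sum2)
    then show ?thesis by (simp add: ipX)
  qed
  define c where "c = (\<lambda>t. (-1::real)^(t-l) * real (t choose l))"
  have Nt_spec: "Nt n k t x = (\<Sum>\<theta>\<in>S. gg n (k - t) k \<theta> / (fact (k - t))^2 * ip n k (X \<theta>) (X \<theta>))"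
    if t: "t \<le> k" for t
  proof -
    define s where "s = k - t"
    have ts: "t + s = k" "k - s = t" "s \<le> k" using t by (auto simp: s_def)
    have "Nt n k t x = ip n t ((Dop n ^^ s) x) ((Dop n ^^ s) x) / (fact s)^2"
      using Nt_ip[OF t] by (simp add: s_def)
    also have "ip n t ((Dop n ^^ s) x) ((Dop n ^^ s) x) = ip n k x ((Uop ^^ s) ((Dop n ^^ s) x))"
      using adjoint_iter[OF ts(3), of n x "(Dop n ^^ s) x"] ts by simp
    also have "eqon n k ((Uop ^^ s) ((Dop n ^^ s) x)) (\<lambda>A. \<Sum>\<theta>\<in>S. gg n s k \<theta> * X \<theta> A)"
    proof -
      have "eqon n t ((Dop n ^^ s) x) ((Dop n ^^ s) (\<lambda>A. \<Sum>\<theta>\<in>S. X \<theta> A))"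
        by (rule Dpow_eqon) (use hx ts in simp)
      from Upow_eqon[OF this, of s] ts
      have 1: "eqon n k ((Uop ^^ s) ((Dop n ^^ s) x)) (\<lambda>A. \<Sum>\<theta>\<in>S. (Uop ^^ s) ((Dop n ^^ s) (X \<theta>)) A)"
        by (simp add: Dpow_sum Upow_sum)
      have 2: "eqon n k (\<lambda>A. \<Sum>\<theta>\<in>S. (Uop ^^ s) ((Dop n ^^ s) (X \<theta>)) A) (\<lambda>A. \<Sum>\<theta>\<in>S. gg n s k \<theta> * X \<theta> A)"
        by (rule eqon_sum) (rule eig[OF ts(3) hX])
      show ?thesis using 1 2 by (rule eqon_trans)
    qed
    then have "ip n k x ((Uop ^^ s) ((Dop n ^^ s) x)) = ip n k x (\<lambda>A. \<Sum>\<theta>\<in>S. gg n s k \<theta> * X \<theta> A)"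
      by (rule ip_eqon2)
    also have "\<dots> = (\<Sum>\<theta>\<in>S. gg n s k \<theta> * ip n k (X \<theta>) (X \<theta>))"
      by (simp add: ip_sum2 ip_cmult2 ipX)
    finally show ?thesis by (simp add: s_def sum_divide_distrib)
  qed
  define Eh where "Eh = (\<lambda>\<theta>. \<Sum>t\<in>{l..k}. c t * (gg n (k - t) k \<theta> / (fact (k - t))^2))"
  have "Qf n k l x = (\<Sum>t\<in>{l..k}. c t * Nt n k t x)" by (simp add: Qf_expand c_def)
  also have "\<dots> = (\<Sum>t\<in>{l..k}. \<Sum>\<theta>\<in>S. c t * (gg n (k - t) k \<theta> / (fact (k - t))^2) * ip n k (X \<theta>) (X \<theta>))"
    by (rule sum.cong[OF refl]) (simp add: Nt_spec sum_distrib_left mult.assoc)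
  also have "\<dots> = (\<Sum>\<theta>\<in>S. Eh \<theta> * ip n k (X \<theta>) (X \<theta>))"
    unfolding Eh_def by (subst sum.swap) (simp add: sum_distrib_right)
  finally have Q: "Qf n k l x = (\<Sum>\<theta>\<in>S. Eh \<theta> * ip n k (X \<theta>) (X \<theta>))" .
  have "lam * ip n k x x + Qf n k l x = (\<Sum>\<theta>\<in>S. (lam + Eh \<theta>) * ip n k (X \<theta>) (X \<theta>))"
    unfolding Q ipxx by (simp add: sum_distrib_left distrib_right sum.distrib)
  also have "\<dots> \<ge> 0"
  proof (rule sum_nonneg)
    fix \<theta> assume th: "\<theta> \<in> S"
    then obtain j where j: "j \<le> k" "\<theta> = th n k j" by (auto simp: S_def set_Rl)
    have "Eh \<theta> = (\<Sum>t\<in>{l..k}. (-1)^(t-l) * real (t choose l) *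
               (real ((k - j) choose (k - t)) * real ((n - t - j) choose (k - t))))"
      unfolding Eh_def c_def
    proof (rule sum.cong[OF refl])
      fix t assume t: "t \<in> {l..k}"
      have e: "n - k - j + (k - t) = n - t - j" using t j kn by auto
      have "gg n (k - t) k \<theta> = (fact (k - t))^2 * real ((k - j) choose (k - t)) * real ((n - t - j) choose (k - t))"
        using gg_closed[of j k n "k - t"] j kn e by simp
      then show "(-1)^(t-l) * real (t choose l) * (gg n (k - t) k \<theta> / (fact (k - t))^2) =
          (-1)^(t-l) * real (t choose l) * (real ((k - j) choose (k - t)) * real ((n - t - j) choose (k - t)))"
        by simp
    qed
    then have "lam + Eh \<theta> \<ge> 0" using Eb[OF j(1)] by simp
    then show "(lam + Eh \<theta>) * ip n k (X \<theta>) (X \<theta>) \<ge> 0" by (simp add: ip_nonneg)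
  qed
  finally show ?thesis .
qed

definition tau :: "nat \<Rightarrow> nat \<Rightarrow> nat \<Rightarrow> nat \<Rightarrow> nat \<Rightarrow> nat" where
  "tau n k l j t = (if t \<le> k then (t choose l) * ((k - j) choose (k - t)) * ((n - t - j) choose (k - t)) else 0)"

lemma poly_bound:
  fixes t k :: nat
  assumes "t < k" "2 \<le> k"
  shows "(t + 1) * (k - t)^2 + 2 * t \<le> k^3 + 1"
proof (cases "t = 0")
  case True
  have "k^2 \<le> k^3" using assms by (simp add: power_increasing)
  then show ?thesis using True by simp
next
  case False
  have a: "t + 1 \<le> k" "k - t \<le> k - 1" using assms False by auto
  have "(t + 1) * (k - t)^2 \<le> k * (k - 1)^2"
    using a by (intro mult_mono power_mono) auto
  moreover have "k * (k - 1)^2 + 2 * k \<le> k^3 + 1"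
  proof -
    obtain q where q: "k = Suc (Suc q)" using assms by (metis add_2_eq_Suc le_Suc_ex)
    show ?thesis unfolding q by (simp add: power2_eq_square power3_eq_cube algebra_simps)
  qed
  ultimately show ?thesis using a by linarith
qed

lemma tau_dec:
  assumes k2: "2 \<le> k" and nk: "k^3 + 1 \<le> n" and jk: "j \<le> k" and lt: "l \<le> t" and jt: "j \<le> t"
  shows "tau n k l j (Suc t) \<le> tau n k l j t"
proof (cases "Suc t \<le> k")
  case False then show ?thesis by (simp add: tau_def)
next
  case True
  then have tk: "t < k" by simp
  define a where "a = t choose l"
  define a' where "a' = Suc t choose l"
  define b where "b = (k - j) choose (k - t)"
  define b' where "b' = (k - j) choose (k - Suc t)"
  define c where "c = (n - t - j) choose (k - t)"
  define c' where "c' = (n - Suc t - j) choose (k - Suc t)"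
  have ha: "(Suc t - l) * a' = Suc t * a"
    unfolding a_def a'_def using binomial_absorb_comp[of "Suc t" l] by simp
  have hb: "(k - t) * b = Suc (t - j) * b'"
  proof -
    have e1: "Suc (k - Suc t + (t - j)) = k - j" using tk jt by simp
    have e2: "Suc (k - Suc t) = k - t" using tk by simp
    show ?thesis using Suc_times_binomial_add[of "k - Suc t" "t - j"] unfolding e1 e2 b_def b'_def .
  qed
  have hc: "(k - t) * c = (n - t - j) * c'"
  proof -
    have "(k - t) * c = (n - t - j) * ((n - t - j - 1) choose (k - t - 1))"
      unfolding c_def using tk by (intro times_binomial_minus1_eq) simp
    moreover have "n - t - j - 1 = n - Suc t - j" "k - t - 1 = k - Suc t" by auto
    ultimately show ?thesis by (simp add: c'_def)
  qed
  define P where "P = (Suc t - l) * Suc (t - j) * (n - t - j)"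
  have key: "a' * b' * c' * P = a * b * c * (Suc t * (k - t)^2)"
  proof -
    have "a' * b' * c' * P = ((Suc t - l) * a') * (Suc (t - j) * b') * ((n - t - j) * c')"
      by (simp only: P_def mult.assoc mult.commute mult.left_commute)
    also have "\<dots> = (Suc t * a) * ((k - t) * b) * ((k - t) * c)" by (simp add: ha hb hc)
    finally show ?thesis by (simp only: power2_eq_square mult.assoc mult.commute mult.left_commute)
  qed
  have pb: "Suc t * (k - t)^2 + t + j \<le> n"
    using poly_bound[OF tk k2] nk jt by simp
  have "Suc t * (k - t)^2 \<le> n - t - j" using pb by simp
  also have "n - t - j \<le> P"
  proof -
    have "1 \<le> (Suc t - l) * Suc (t - j)" using lt by simp
    then show ?thesis unfolding P_def by (metis mult.commute mult_le_mono2 nat_mult_1_right mult.assoc)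
  qed
  finally have QP: "Suc t * (k - t)^2 \<le> P" .
  have X1: "1 \<le> Suc t * (k - t)^2" using tk by (simp add: Suc_le_eq)
  have "t + j < n" using pb X1 by linarith
  then have Ppos: "P > 0"
    unfolding P_def using lt by simp
  have "a' * b' * c' * P \<le> a * b * c * P"
    unfolding key using QP by simp
  then have "a' * b' * c' \<le> a * b * c" using Ppos by simp
  then show ?thesis using True tk by (simp add: tau_def a_def a'_def b_def b'_def c_def c'_def)
qed

definition Ssum :: "nat \<Rightarrow> nat \<Rightarrow> nat \<Rightarrow> nat \<Rightarrow> nat \<Rightarrow> real" where
  "Ssum n k l j p = (\<Sum>t\<in>{p..k}. (-1)^(t-p) * real (tau n k l j t))"

lemma S_rec: "Ssum n k l j p = real (tau n k l j p) - Ssum n k l j (Suc p)"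
proof (cases "p \<le> k")
  case False then show ?thesis by (simp add: Ssum_def tau_def)
next
  case True
  have e: "{p..k} = insert p {Suc p..k}" using True by auto
  have "(\<Sum>t\<in>{Suc p..k}. (-1)^(t-p) * real (tau n k l j t)) =
        - (\<Sum>t\<in>{Suc p..k}. (-1)^(t - Suc p) * real (tau n k l j t))"
    unfolding sum_negf[symmetric]
  proof (rule sum.cong[OF refl])
    fix t assume "t \<in> {Suc p..k}"
    then have "t - p = Suc (t - Suc p)" by auto
    then show "(-1)^(t-p) * real (tau n k l j t) = - ((-1)^(t - Suc p) * real (tau n k l j t))" by simp
  qed
  then show ?thesis unfolding Ssum_def e by simp
qed

lemma S_bounds_aux:
  assumes dec: "\<And>t. p0 \<le> t \<Longrightarrow> tau n k l j (Suc t) \<le> tau n k l j t"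
  shows "Suc k - p = m \<Longrightarrow> p0 \<le> p \<Longrightarrow> 0 \<le> Ssum n k l j p \<and> Ssum n k l j p \<le> real (tau n k l j p)"
proof (induction m arbitrary: p)
  case 0
  then have "k < p" by simp
  then show ?case by (simp add: Ssum_def tau_def)
next
  case (Suc m)
  have IH: "0 \<le> Ssum n k l j (Suc p) \<and> Ssum n k l j (Suc p) \<le> real (tau n k l j (Suc p))"
    using Suc.IH[of "Suc p"] Suc.prems by simp
  have "tau n k l j (Suc p) \<le> tau n k l j p" using dec Suc.prems by simp
  then show ?case using IH S_rec[of n k l j p] by simp
qed

lemma S_bounds:
  assumes dec: "\<And>t. p0 \<le> t \<Longrightarrow> tau n k l j (Suc t) \<le> tau n k l j t" and "p0 \<le> p"
  shows "0 \<le> Ssum n k l j p" "Ssum n k l j p \<le> real (tau n k l j p)"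
  using S_bounds_aux[OF dec refl assms(2)] by auto

lemma antitone_from:
  assumes dec: "\<And>t. p0 \<le> t \<Longrightarrow> f (Suc t) \<le> (f t :: nat)"
  shows "p0 \<le> a \<Longrightarrow> a \<le> b \<Longrightarrow> f b \<le> f a"
proof (induction b)
  case 0 then show ?case by simp
next
  case (Suc b)
  show ?case
  proof (cases "a = Suc b")
    case True then show ?thesis by simp
  next
    case False
    then have "a \<le> b" using Suc.prems by simp
    then show ?thesis using Suc.IH Suc.prems dec[of b] by (meson le_trans)
  qed
qed

lemma shift_aux: "Q = A + B \<Longrightarrow> B \<le> (X::nat) \<Longrightarrow> P \<le> Q + d * X \<Longrightarrow> P \<le> A + (X + d * X)"
  by linarith

lemma binom_shift:
  "d \<le> m \<Longrightarrow> 1 \<le> r \<Longrightarrow> m choose r \<le> ((m - d) choose r) + d * ((m - 1) choose (r - 1))"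
proof (induction d)
  case 0 then show ?case by simp
next
  case (Suc d)
  define X where "X = (m - 1) choose (r - 1)"
  define q where "q = m - Suc d"
  have mdq: "m - d = Suc q" using Suc.prems unfolding q_def by simp
  obtain r' where r: "r = Suc r'" using Suc.prems by (cases r) auto
  have pas: "(m - d) choose r = (q choose r) + (q choose (r - 1))" unfolding mdq r by simp
  have mono: "q choose (r - 1) \<le> X"
    unfolding X_def by (rule binomial_right_mono) (use q_def in simp)
  have "m choose r \<le> ((m - d) choose r) + d * X"
    using Suc.IH Suc.prems by (simp add: X_def)
  also have "\<dots> = (q choose r) + (q choose (r - 1)) + d * X" using pas by linarith
  also have "\<dots> \<le> (q choose r) + X + d * X" using mono by simp
  also have "\<dots> = ((m - Suc d) choose r) + Suc d * X" by (simp add: q_def)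
  finally show ?case by (simp add: X_def)
qed

lemma cube_bound:
  fixes l r :: nat
  assumes "1 \<le> l"
  shows "2 * l * r^2 + 2 * l + 3 \<le> (l + r + 1)^3 + 1"
proof -
  have e: "(l + r + 1)^3 = l^3 + 3*l^2*(r+1) + 3*l*r^2 + 6*l*r + 3*l + (r+1)^3"
    by (simp add: power3_eq_cube power2_eq_square algebra_simps)
  have "1 \<le> (r+1)^3" by simp
  then show ?thesis unfolding e using assms by linarith
qed

lemma numeric_ineq:
  fixes L R M1 :: real
  assumes L: "1 \<le> L" and R: "L + 1 \<le> R" and M: "2 * L * R^2 \<le> M1"
  shows "12 * (L + 1) * (R - L) * M1 + (L + 3) * (L + 2) * (L + 1) * R * (R - 1)^2
         \<le> 6 * (L + 2) * (L + 1) * R * M1"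
proof -
  have R1: "1 \<le> R" using L R by simp
  have A: "(L + 3) * (L + 2) \<le> 12 * L^2"
  proof -
    have "0 \<le> (L - 1) * (11 * L + 6)" using L by simp
    then show ?thesis by (simp add: power2_eq_square algebra_simps)
  qed
  have B: "R * (R - 1)^2 \<le> R^2 * (R + 2)"
  proof -
    have "0 \<le> R * (4 * R - 1)" using R1 by simp
    then show ?thesis by (simp add: power2_eq_square algebra_simps)
  qed
  have "(L + 3) * (L + 2) * (R * (R - 1)^2) \<le> 12 * L^2 * (R^2 * (R + 2))"
    by (rule mult_mono[OF A B]) (use R1 in auto)
  also have "\<dots> = 6 * L * (R + 2) * (2 * L * R^2)" by (simp add: power2_eq_square algebra_simps)
  also have "\<dots> \<le> 6 * L * (R + 2) * M1"
    by (rule mult_left_mono[OF M]) (use L R1 in simp)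
  finally have C: "(L + 3) * (L + 2) * (R * (R - 1)^2) \<le> 6 * L * (R + 2) * M1" .
  have "(L + 1) * ((L + 3) * (L + 2) * (R * (R - 1)^2)) \<le> (L + 1) * (6 * L * (R + 2) * M1)"
    by (rule mult_left_mono[OF C]) (use L in simp)
  then show ?thesis by (simp add: algebra_simps)
qed

lemma three_term:
  assumes k2: "2 \<le> k" and nk: "k^3 + 1 \<le> n" and l1: "1 \<le> l" and lk: "l + 1 \<le> k"
  shows "tau n k l (l+1) (l+1) + tau n k l (l+1) (l+3) \<le>
         (l+1) * ((n-k-1) choose (k-l-1)) + tau n k l (l+1) (l+2)"
proof -
  obtain r where kr: "k = l + r + 1" using lk by (metis add.commute add.left_commute le_Suc_ex Suc_eq_plus1)
  define m where "m = n - 2*l - 2"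
  have cb: "2 * l * r^2 + 2 * l + 3 \<le> n" using cube_bound[OF l1, of r] nk kr by simp
  have t1: "tau n k l (l+1) (l+1) = (l+1) * (m choose r)"
    unfolding tau_def m_def using kr by (simp add: numeral_eq_Suc)
  show ?thesis
  proof (cases "r \<le> l")
    case True
    have "m \<le> n - k - 1" unfolding m_def using True kr by simp
    then have "m choose r \<le> (n - k - 1) choose r" by (rule binomial_right_mono)
    then have "(l+1) * (m choose r) \<le> (l+1) * ((n - k - 1) choose r)" by (rule mult_le_mono2)
    moreover have "k - l - 1 = r" using kr by simp
    ultimately have a: "tau n k l (l+1) (l+1) \<le> (l+1) * ((n-k-1) choose (k-l-1))"
      unfolding t1 by simp
    have b: "tau n k l (l+1) (l+3) \<le> tau n k l (l+1) (l+2)"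
      using tau_dec[OF k2 nk, of "l+1" l "l+2"] lk by (simp add: numeral_eq_Suc)
    show ?thesis using a b by simp
  next
    case False
    then have rl: "l < r" by simp
    then have r2: "2 \<le> r" using l1 by simp
    define d where "d = r - l"
    define X where "X = (m - 1) choose (r - 1)"
    define Y where "Y = (m - 2) choose (r - 2)"
    have mbig: "2 * l * r^2 + 1 \<le> m" unfolding m_def using cb by simp
    have lr2: "r \<le> l * r^2"
    proof -
      have "r \<le> r^2" by (simp add: power2_eq_square)
      also have "\<dots> \<le> l * r^2" using l1 by simp
      finally show ?thesis .
    qed
    have dm: "d \<le> m" unfolding d_def using mbig lr2 by simp
    have nk1: "n - k - 1 = m - d" unfolding m_def d_def using kr rl cb by simp
    have t2: "tau n k l (l+1) (l+2) = ((l+2) choose 2) * r * X"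
    proof -
      have "(l + 2) choose l = (l+2) choose 2"
        using binomial_symmetric[of l "l+2"] by simp
      moreover have "r choose (r - 1) = r"
        using binomial_symmetric[of 1 r] r2 by simp
      moreover have "k - (l+2) = r - 1" "n - (l+2) - (l+1) = m - 1" using kr cb by (auto simp: m_def)
      ultimately show ?thesis unfolding tau_def X_def using kr by (simp add: mult.assoc)
    qed
    have t3: "tau n k l (l+1) (l+3) = ((l+3) choose 3) * (r choose 2) * Y"
    proof -
      have "(l + 3) choose l = (l+3) choose 3"
        using binomial_symmetric[of l "l+3"] by simp
      moreover have "r choose (r - 2) = r choose 2"
        using binomial_symmetric[of 2 r] r2 by simp
      moreover have "k - (l+3) = r - 2" "n - (l+3) - (l+1) = m - 2" "k - (l+1) = r" using kr cb by (auto simp: m_def)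
      ultimately show ?thesis unfolding tau_def Y_def using kr r2 by (simp add: mult.assoc)
    qed
    have h1: "m choose r \<le> ((m - d) choose r) + d * X"
      unfolding X_def by (rule binom_shift[OF dm]) (use r2 in simp)
    have h2: "(r - 1) * X = (m - 1) * Y"
    proof -
      have "(r - 1) * X = (m - 1) * ((m - 1 - 1) choose (r - 1 - 1))"
        unfolding X_def using r2 by (intro times_binomial_minus1_eq) simp
      moreover have "m - 1 - 1 = m - 2" "r - 1 - 1 = r - 2" by auto
      ultimately show ?thesis by (simp add: Y_def)
    qed
    have B2: "2 * ((l+2) choose 2) = (l+2) * (l+1)"
      using Suc_times_binomial[of 1 "l+1"] by (simp add: numeral_eq_Suc)
    have B3: "3 * ((l+3) choose 3) = (l+3) * ((l+2) choose 2)"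
      using Suc_times_binomial[of 2 "l+2"] by (simp add: numeral_eq_Suc)
    have R2: "2 * (r choose 2) = r * (r - 1)"
      using Suc_times_binomial[of 1 "r - 1"] r2 by (simp add: numeral_eq_Suc)
    define L where "L = real l"
    define R where "R = real r"
    define M1 where "M1 = real (m - 1)"
    have lr22: "2 \<le> l * r^2" using lr2 r2 by linarith
    have M1pos: "M1 > 0" unfolding M1_def using mbig lr22 by simp
    have M1e: "M1 = real m - 1" unfolding M1_def using mbig by simp
    have rM: "2 * L * R^2 \<le> M1"
    proof -
      have "2 * l * r^2 \<le> m - 1" using mbig by simp
      then have "real (2 * l * r^2) \<le> real (m - 1)" by linarith
      then show ?thesis unfolding L_def R_def M1_def by simp
    qed
    have num: "12 * (L + 1) * (R - L) * M1 + (L + 3) * (L + 2) * (L + 1) * R * (R - 1)^2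
         \<le> 6 * (L + 2) * (L + 1) * R * M1"
      by (rule numeric_ineq) (use l1 rl rM in \<open>auto simp: L_def R_def\<close>)
    have rB2: "real ((l+2) choose 2) = (L + 2) * (L + 1) / 2"
      using B2 unfolding L_def by (metis (mono_tags, lifting) nonzero_mult_div_cancel_left of_nat_add of_nat_mult of_nat_numeral of_nat_1 zero_neq_numeral)
    have rB3: "real ((l+3) choose 3) = (L + 3) * (L + 2) * (L + 1) / 6"
    proof -
      have "real (3 * ((l+3) choose 3)) = real ((l+3) * ((l+2) choose 2))" using B3 by simp
      then have "3 * real ((l+3) choose 3) = (L + 3) * real ((l+2) choose 2)" unfolding L_def by simp
      then show ?thesis unfolding rB2 by (simp add: field_simps)
    qed
    have rR2: "real (r choose 2) = R * (R - 1) / 2"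
    proof -
      have "real (2 * (r choose 2)) = real (r * (r - 1))" using R2 by simp
      then show ?thesis unfolding R_def using r2 by (simp add: of_nat_diff)
    qed
    have rd: "real d = R - L" unfolding d_def R_def L_def using rl by simp
    have rh2: "(R - 1) * real X = M1 * real Y"
    proof -
      have "real ((r - 1) * X) = real ((m - 1) * Y)" using h2 by simp
      then show ?thesis unfolding R_def M1_def using r2 by (simp add: of_nat_diff)
    qed
    have Xnn: "real X \<ge> 0" by simp
    have goal_r: "(L + 1) * real d * real X + real ((l+3) choose 3) * real (r choose 2) * real Y
                 \<le> real ((l+2) choose 2) * R * real X"
    proof -
      have "M1 * ((L + 1) * real d * real X + real ((l+3) choose 3) * real (r choose 2) * real Y)
          = (L + 1) * (R - L) * M1 * real X + (L + 3) * (L + 2) * (L + 1) / 6 * (R * (R - 1) / 2) * (M1 * real Y)"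
        unfolding rd rB3 rR2 by (simp add: algebra_simps)
      also have "\<dots> = real X * ((12 * (L + 1) * (R - L) * M1 + (L + 3) * (L + 2) * (L + 1) * R * (R - 1)^2) / 12)"
        unfolding rh2[symmetric] by (simp add: power2_eq_square field_simps)
      also have "\<dots> \<le> real X * (6 * (L + 2) * (L + 1) * R * M1 / 12)"
        by (rule mult_left_mono) (use num in simp_all)
      also have "\<dots> = M1 * (real ((l+2) choose 2) * R * real X)"
        unfolding rB2 by (simp add: algebra_simps)
      finally show ?thesis using M1pos by simp
    qed
    have goal_n: "(l + 1) * d * X + ((l+3) choose 3) * (r choose 2) * Y \<le> ((l+2) choose 2) * r * X"
    proof -
      have e1: "real ((l + 1) * d * X + ((l+3) choose 3) * (r choose 2) * Y) =
          (L + 1) * real d * real X + real ((l+3) choose 3) * real (r choose 2) * real Y"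
        unfolding L_def by (simp only: of_nat_add of_nat_mult of_nat_1)
      have e2: "real (((l+2) choose 2) * r * X) = real ((l+2) choose 2) * R * real X"
        unfolding R_def by (simp only: of_nat_mult)
      have "real ((l + 1) * d * X + ((l+3) choose 3) * (r choose 2) * Y) \<le> real (((l+2) choose 2) * r * X)"
        unfolding e1 e2 by (rule goal_r)
      then show ?thesis by (simp only: of_nat_le_iff)
    qed
    have "tau n k l (l+1) (l+1) \<le> (l+1) * ((m - d) choose r) + (l+1) * d * X"
      unfolding t1 using h1 by (metis add_mult_distrib2 mult.assoc mult_le_mono2)
    then show ?thesis unfolding t2 t3 nk1 using goal_n kr by simp
  qed
qed

lemma E_tau:
  "(\<Sum>t\<in>{l..k}. (-1)^(t-l) * real (t choose l) * (real ((k - j) choose (k - t)) * real ((n - t - j) choose (k - t))))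
   = (\<Sum>t\<in>{l..k}. (-1)^(t-l) * real (tau n k l j t))"
  by (rule sum.cong[OF refl]) (simp add: tau_def mult.assoc)

lemma E_split:
  assumes "j \<le> k" "l < j"
  shows "(\<Sum>t\<in>{l..k}. (-1)^(t-l) * real (tau n k l j t)) = (-1)^(j-l) * Ssum n k l j j"
proof -
  have e: "{l..k} = {l..<j} \<union> {j..k}" using assms by auto
  have z: "(\<Sum>t\<in>{l..<j}. (-1)^(t-l) * real (tau n k l j t)) = 0"
  proof (rule sum.neutral, rule ballI)
    fix t assume "t \<in> {l..<j}"
    then have "k - j < k - t" using assms by auto
    then show "(-1)^(t-l) * real (tau n k l j t) = 0" by (simp add: tau_def)
  qed
  have "(\<Sum>t\<in>{j..k}. (-1)^(t-l) * real (tau n k l j t)) = (-1)^(j-l) * Ssum n k l j j"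
    unfolding Ssum_def sum_distrib_left
  proof (rule sum.cong[OF refl])
    fix t assume "t \<in> {j..k}"
    then have "t - l = (j - l) + (t - j)" using assms by auto
    then show "(-1)^(t-l) * real (tau n k l j t) = (-1)^(j-l) * ((-1)^(t-j) * real (tau n k l j t))"
      by (simp add: power_add)
  qed
  then show ?thesis unfolding e by (subst sum.union_disjoint) (auto simp: z)
qed

lemma E_bound:
  assumes k2: "2 \<le> k" and nk: "k^3 + 1 \<le> n" and l1: "1 \<le> l" and lk: "l \<le> k - 1" and jk: "j \<le> k"
  shows "real ((l+1) * ((n-k-1) choose (k-l-1))) +
    (\<Sum>t\<in>{l..k}. (-1)^(t-l) * real (t choose l) * (real ((k - j) choose (k - t)) * real ((n - t - j) choose (k - t)))) \<ge> 0"
proof -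
  define lam where "lam = (l+1) * ((n-k-1) choose (k-l-1))"
  have lk1: "l + 1 \<le> k" using lk k2 by simp
  have dec: "\<And>t. max l j \<le> t \<Longrightarrow> tau n k l j (Suc t) \<le> tau n k l j t"
    using tau_dec[OF k2 nk jk] by simp
  have dec1: "\<And>t. l + 1 \<le> t \<Longrightarrow> tau n k l (l+1) (Suc t) \<le> tau n k l (l+1) t"
    using tau_dec[OF k2 nk lk1] by simp
  have tt: "tau n k l (l+1) (l+1) + tau n k l (l+1) (l+3) \<le> lam + tau n k l (l+1) (l+2)"
    unfolding lam_def by (rule three_term[OF k2 nk l1 lk1])
  have t21: "tau n k l (l+1) (l+2) \<le> tau n k l (l+1) (l+1)" using dec1[of "l+1"] by simp
  have t3lam: "tau n k l (l+1) (l+3) \<le> lam" using tt t21 by simp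
  show ?thesis
  proof (cases "j \<le> l")
    case True
    have "max l j = l" using True by simp
    then have "0 \<le> Ssum n k l j l" using S_bounds(1)[of "max l j" n k l j l] dec by simp
    then show ?thesis unfolding E_tau by (simp add: Ssum_def)
  next
    case False
    then have lj: "l < j" by simp
    have mj: "max l j = j" using lj by simp
    have Sb: "0 \<le> Ssum n k l j j" "Ssum n k l j j \<le> real (tau n k l j j)"
      using S_bounds[of "max l j" n k l j j] dec mj by auto
    show ?thesis
    proof (cases "even (j - l)")
      case True
      then show ?thesis unfolding E_tau E_split[OF jk lj] using Sb by simp
    next
      case odd: False
      have neg: "(\<Sum>t\<in>{l..k}. (-1)^(t-l) * real (tau n k l j t)) = - Ssum n k l j j"
        unfolding E_split[OF jk lj] using odd by simp
      have "Ssum n k l j j \<le> real lam"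
      proof (cases "j = l + 1")
        case True
        have d: "\<And>t. l + 1 \<le> t \<Longrightarrow> tau n k l j (Suc t) \<le> tau n k l j t" using dec1 True by simp
        have "Ssum n k l j (l+3) \<le> real (tau n k l j (l+3))"
          using S_bounds(2)[OF d, of "l+3"] by simp
        moreover have "Ssum n k l j j = real (tau n k l j (l+1)) - real (tau n k l j (l+2)) + Ssum n k l j (l+3)"
          using S_rec[of n k l j "l+1"] S_rec[of n k l j "l+2"] True by (simp add: numeral_eq_Suc)
        ultimately have "Ssum n k l j j \<le> real (tau n k l j (l+1)) - real (tau n k l j (l+2)) + real (tau n k l j (l+3))"
          by simp
        also have "\<dots> \<le> real lam"
        proof -
          have h: "real (tau n k l (l+1) (l+1)) + real (tau n k l (l+1) (l+3)) \<le> real lam + real (tau n k l (l+1) (l+2))"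
            unfolding of_nat_add[symmetric] of_nat_le_iff by (rule tt)
          show ?thesis unfolding True using h by linarith
        qed
        finally show ?thesis .
      next
        case False
        have n1: "j - l \<noteq> 1" using False lj by auto
        have n2: "j - l \<noteq> 2"
        proof
          assume "j - l = 2"
          then have "even (j - l)" by simp
          then show False using odd by simp
        qed
        have j3: "l + 3 \<le> j" using n1 n2 lj by linarith
        have a: "tau n k l j j \<le> tau n k l (l+1) j"
        proof -
          have "k - j \<le> k - (l+1)" using j3 by simp
          then have "0 < (k - (l+1)) choose (k - j)" by (rule zero_less_binomial)
          then have "1 \<le> (k - (l+1)) choose (k - j)" by linarith
          moreover have "(n - j - j) choose (k - j) \<le> (n - j - (l+1)) choose (k - j)"
            by (rule binomial_right_mono) (use j3 in simp)
          ultimately have "(j choose l) * 1 * ((n - j - j) choose (k - j)) \<le>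
                (j choose l) * ((k - (l+1)) choose (k - j)) * ((n - j - (l+1)) choose (k - j))"
            by (intro mult_le_mono mult_le_mono2) auto
          then show ?thesis using jk by (simp add: tau_def)
        qed
        have b: "tau n k l (l+1) j \<le> tau n k l (l+1) (l+3)"
          by (rule antitone_from[of "l+1" "tau n k l (l+1)", OF dec1]) (use j3 in simp_all)
        have "Ssum n k l j j \<le> real (tau n k l j j)" by (rule Sb(2))
        also have "\<dots> \<le> real lam" using a b t3lam by simp
        finally show ?thesis .
      qed
      then show ?thesis unfolding E_tau neg lam_def by simp
    qed
  qed
qed

lemma delta_sum:
  assumes "finite V" "i \<in> V"
  shows "(\<Sum>b\<in>V. f b * (if b = i then 1 else (0::real))) = f i"
proof -
  have "(\<Sum>b\<in>V. f b * (if b = i then 1 else (0::real))) = (\<Sum>b\<in>V. if b = i then f b else 0)"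
    by (rule sum.cong) auto
  then show ?thesis using assms by simp
qed

lemma pair_bound:
  assumes fin: "finite V" and psd: "psd_on V B" and i: "i \<in> V" and j: "j \<in> V"
  shows "B i j + B j i \<le> B i i + B j j"
proof -
  define x where "x = (\<lambda>v. (if v = i then 1 else 0) - (if v = j then (1::real) else 0))"
  have inner: "(\<Sum>b\<in>V. x a * B a b * x b) = x a * (B a i - B a j)" for a
  proof -
    have "(\<Sum>b\<in>V. x a * B a b * x b) = x a * (\<Sum>b\<in>V. B a b * x b)"
      by (simp add: sum_distrib_left mult.assoc)
    also have "(\<Sum>b\<in>V. B a b * x b) = (\<Sum>b\<in>V. B a b * (if b = i then 1 else 0)) - (\<Sum>b\<in>V. B a b * (if b = j then 1 else 0))"
      unfolding x_def right_diff_distrib sum_subtractf ..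
    also have "\<dots> = B a i - B a j" using delta_sum[OF fin i] delta_sum[OF fin j] by simp
    finally show ?thesis .
  qed
  have "(\<Sum>a\<in>V. \<Sum>b\<in>V. x a * B a b * x b) = (\<Sum>a\<in>V. (B a i - B a j) * x a)"
    using inner by (simp add: mult.commute)
  also have "\<dots> = (\<Sum>a\<in>V. (B a i - B a j) * (if a = i then 1 else 0)) - (\<Sum>a\<in>V. (B a i - B a j) * (if a = j then 1 else 0))"
    unfolding x_def right_diff_distrib sum_subtractf ..
  also have "\<dots> = (B i i - B i j) - (B j i - B j j)"
    using delta_sum[OF fin i, of "\<lambda>a. B a i - B a j"] delta_sum[OF fin j, of "\<lambda>a. B a i - B a j"] by simp
  finally have e: "(\<Sum>a\<in>V. \<Sum>b\<in>V. x a * B a b * x b) = (B i i - B i j) - (B j i - B j j)" .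
  have "(\<Sum>a\<in>V. \<Sum>b\<in>V. x a * B a b * x b) \<ge> 0" using psd by (simp add: psd_on_def)
  then show ?thesis unfolding e by simp
qed

lemma feasible_bound:
  assumes fin: "finite V" and psd: "psd_on V B" and tr: "(\<Sum>i\<in>V. B i i) = 1"
  shows "(\<Sum>i\<in>V. \<Sum>j\<in>V. B i j) \<le> real (card V)"
proof -
  have "2 * (\<Sum>i\<in>V. \<Sum>j\<in>V. B i j) = (\<Sum>i\<in>V. \<Sum>j\<in>V. B i j + B j i)"
    by (simp add: sum.distrib sum.swap[of "\<lambda>i j. B j i"])
  also have "\<dots> \<le> (\<Sum>i\<in>V. \<Sum>j\<in>V. B i i + B j j)"
    by (intro sum_mono pair_bound[OF fin psd])
  also have "\<dots> = 2 * real (card V)"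
    using tr by (simp add: sum.distrib sum_distrib_left[symmetric])
  finally show ?thesis by simp
qed

lemma theta_ge:
  assumes fin: "finite V" and psd: "psd_on V B" and tr: "(\<Sum>i\<in>V. B i i) = 1"
    and ed: "\<forall>i\<in>V. \<forall>j\<in>V. E i j \<longrightarrow> B i j = 0"
  shows "(\<Sum>i\<in>V. \<Sum>j\<in>V. B i j) \<le> lovasz_theta V E"
  unfolding lovasz_theta_def
proof (rule cSup_upper)
  show "(\<Sum>i\<in>V. \<Sum>j\<in>V. B i j) \<in> {(\<Sum>i\<in>V. \<Sum>j\<in>V. B i j) | B.
      psd_on V B \<and> (\<Sum>i\<in>V. B i i) = 1 \<and> (\<forall>i\<in>V. \<forall>j\<in>V. E i j \<longrightarrow> B i j = 0)}"
    using psd tr ed by blast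
  show "bdd_above {(\<Sum>i\<in>V. \<Sum>j\<in>V. B i j) | B.
      psd_on V B \<and> (\<Sum>i\<in>V. B i i) = 1 \<and> (\<forall>i\<in>V. \<forall>j\<in>V. E i j \<longrightarrow> B i j = 0)}"
    by (rule bdd_aboveI[where M="real (card V)"]) (auto intro: feasible_bound[OF fin])
qed

lemma johnson_lev: "johnson_verts n k = lev n k"
  by (simp add: johnson_verts_def lev_def)

lemma card_lev: "card (lev n k) = n choose k"
  unfolding lev_def using n_subsets[of "{1..n}" k] by simp

lemma count_l:
  assumes A: "A \<in> lev n k" and lk: "l \<le> k"
  shows "card {B\<in>lev n k. card (A \<inter> B) = l} = (k choose l) * ((n - k) choose (k - l))"
proof -
  have fA: "finite A" and sA: "A \<subseteq> {1..n}" and cA: "card A = k" using A lev_finite[OF A] by (auto simp: lev_def)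
  define X where "X = {B\<in>lev n k. card (A \<inter> B) = l}"
  define Y where "Y = {S. S \<subseteq> A \<and> card S = l} \<times> {P. P \<subseteq> {1..n} - A \<and> card P = k - l}"
  define f where "f = (\<lambda>B. (A \<inter> B, B - A))"
  have inj: "inj_on f X"
  proof (rule inj_onI)
    fix B B' assume "B \<in> X" "B' \<in> X" "f B = f B'"
    then have "A \<inter> B = A \<inter> B'" "B - A = B' - A" by (auto simp: f_def)
    then show "B = B'" by blast
  qed
  have img: "f ` X = Y"
  proof
    show "f ` X \<subseteq> Y"
    proof
      fix y assume "y \<in> f ` X"
      then obtain B where B: "B \<in> lev n k" "card (A \<inter> B) = l" "y = f B" by (auto simp: X_def)
      have fB: "finite B" using lev_finite[OF B(1)] .
      have "card (B - A) = card B - card (B \<inter> A)" using fB by (simp add: card_Diff_subset_Int)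
      then have "card (B - A) = k - l" using B by (simp add: lev_def Int_commute)
      then show "y \<in> Y" using B sA by (auto simp: Y_def f_def lev_def)
    qed
    show "Y \<subseteq> f ` X"
    proof
      fix y assume "y \<in> Y"
      then obtain S P where y: "y = (S, P)" "S \<subseteq> A" "card S = l" "P \<subseteq> {1..n} - A" "card P = k - l"
        by (auto simp: Y_def)
      have fS: "finite S" using y(2) fA finite_subset by blast
      have fP: "finite P" using y(4) finite_subset by blast
      have disj: "S \<inter> P = {}" using y by auto
      have "card (S \<union> P) = k" using card_Un_disjoint[OF fS fP disj] y lk by simp
      moreover have "S \<union> P \<subseteq> {1..n}" using y sA by auto
      moreover have "A \<inter> (S \<union> P) = S" "S \<union> P - A = P" using y by auto
      ultimately show "y \<in> f ` X"
        unfolding X_def f_def lev_def using y by (auto intro!: image_eqI[where x="S \<union> P"])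
    qed
  qed
  have "card X = card Y" using card_image[OF inj] img by simp
  also have "\<dots> = (k choose l) * ((n - k) choose (k - l))"
    unfolding Y_def card_cartesian_product using n_subsets[OF fA, of l] n_subsets[of "{1..n} - A" "k - l"]
      card_Diff_subset[OF fA sA] cA by simp
  finally show ?thesis by (simp add: X_def)
qed

lemma alg_helper:
  fixes K C1 C2 L1 M a :: real
  assumes "K > 0" "C2 > 0" "L1 > 0" "K * C1 = M * C2"
  shows "a * C1 / (L1 * C2) = a / (K * L1) * M"
proof -
  have "C1 = M * C2 / K" using assms(1,4) by (simp add: field_simps)
  then show ?thesis using assms(1-3) by (simp add: field_simps)
qed

lemma spectral_case:
  fixes n k l :: nat
  assumes k2: "k \<ge> 2" and nk: "n \<ge> k ^ 3 + 1" and lk: "l \<le> k - 1" and l1: "1 \<le> l"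
  shows "lovasz_theta (johnson_verts n k) (gen_johnson_adj {l})
           \<ge> real (k choose (k - l)) / (real (k - l) * real (l + 1)) * (real n - real k)"
proof -
  define V where "V = lev n k"
  have finV: "finite V" by (simp add: V_def finite_lev)
  have k3: "2 * k \<le> n"
  proof -
    have "2 * 2 \<le> k * k" using mult_le_mono[OF k2 k2] .
    then have "2 \<le> k * k" by simp
    then have "2 * k \<le> (k * k) * k" using mult_le_mono1 by blast
    moreover have "k ^ 3 = k * k * k" by (simp add: power3_eq_cube)
    ultimately show ?thesis using nk by linarith
  qed
  define N where "N = real (n choose k)"
  have Npos: "N > 0" unfolding N_def using k3 by simp
  have cV: "real (card V) = N" by (simp add: V_def card_lev N_def)
  define lam where "lam = real ((l+1) * ((n-k-1) choose (k-l-1)))"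
  have "0 < (n-k-1) choose (k-l-1)" by (rule zero_less_binomial) (use k3 in simp)
  then have "0 < (l+1) * ((n-k-1) choose (k-l-1))" by simp
  then have lampos: "lam > 0" unfolding lam_def by (simp only: of_nat_0_less_iff)
  define d where "d = (k choose l) * ((n - k) choose (k - l))"
  define B where "B = (\<lambda>(i::nat set) j. ((if i = j then lam else 0) + (if card (i \<inter> j) = l then 1 else 0)) / (N * lam))"
  have cardk: "i \<in> V \<Longrightarrow> card i \<noteq> l" for i using lk k2 by (auto simp: V_def lev_def)
  have quad: "(\<Sum>i\<in>V. \<Sum>j\<in>V. x i * B i j * x j) = (lam * ip n k x x + Qf n k l x) / (N * lam)" for x :: "nat set \<Rightarrow> real"
  proof -
    have "(\<Sum>i\<in>V. \<Sum>j\<in>V. x i * B i j * x j) =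
        (\<Sum>i\<in>V. \<Sum>j\<in>V. ((if i = j then lam * (x i * x j) else 0) + (if card (i \<inter> j) = l then x i * x j else 0)) / (N * lam))"
      unfolding B_def by (intro sum.cong refl) (simp add: field_simps)
    also have "\<dots> = ((\<Sum>i\<in>V. \<Sum>j\<in>V. if i = j then lam * (x i * x j) else 0) +
        (\<Sum>i\<in>V. \<Sum>j\<in>V. if card (i \<inter> j) = l then x i * x j else 0)) / (N * lam)"
      by (simp add: sum_divide_distrib[symmetric] sum.distrib)
    also have "(\<Sum>i\<in>V. \<Sum>j\<in>V. if i = j then lam * (x i * x j) else 0) = lam * ip n k x x"
      using finV by (simp add: ip_def V_def sum_distrib_left)
    finally show ?thesis by (simp add: Qf_def V_def)
  qed
  have psd: "psd_on V B"
    unfolding psd_on_def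
  proof (intro conjI ballI allI)
    fix i j assume "i \<in> V" "j \<in> V"
    show "B i j = B j i" by (simp add: B_def Int_commute)
  next
    fix x :: "nat set \<Rightarrow> real"
    have Eb: "\<And>j. j \<le> k \<Longrightarrow> lam + (\<Sum>t\<in>{l..k}. (-1)^(t-l) * real (t choose l) *
               (real ((k - j) choose (k - t)) * real ((n - t - j) choose (k - t)))) \<ge> 0"
      unfolding lam_def using E_bound[OF k2 nk l1 lk] by blast
    have "lam * ip n k x x + Qf n k l x \<ge> 0"
      by (rule psd_main[OF _ k3 Eb]) (use k2 in simp_all)
    then show "(\<Sum>i\<in>V. \<Sum>j\<in>V. x i * B i j * x j) \<ge> 0" unfolding quad using Npos lampos by simp
  qed
  have tr: "(\<Sum>i\<in>V. B i i) = 1"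
  proof -
    have "(\<Sum>i\<in>V. B i i) = (\<Sum>i\<in>V. lam / (N * lam))"
      by (rule sum.cong) (auto simp: B_def cardk)
    also have "\<dots> = 1" using cV Npos lampos by simp
    finally show ?thesis .
  qed
  have ed: "\<forall>i\<in>V. \<forall>j\<in>V. gen_johnson_adj {l} i j \<longrightarrow> B i j = 0"
    by (auto simp: gen_johnson_adj_def B_def)
  have val: "(\<Sum>i\<in>V. \<Sum>j\<in>V. B i j) = 1 + real d / lam"
  proof -
    have row: "(\<Sum>j\<in>V. B i j) = (lam + real d) / (N * lam)" if i: "i \<in> V" for i
    proof -
      have "(\<Sum>j\<in>V. B i j) = ((\<Sum>j\<in>V. if i = j then lam else 0) + (\<Sum>j\<in>V. if card (i \<inter> j) = l then 1 else 0)) / (N * lam)"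
        unfolding B_def by (simp add: sum_divide_distrib[symmetric] sum.distrib)
      also have "(\<Sum>j\<in>V. if i = j then lam else 0) = lam" using finV i by simp
      also have "(\<Sum>j\<in>V. if card (i \<inter> j) = l then 1 else 0) = real (card {j\<in>V. card (i \<inter> j) = l})"
        using finV by (simp add: sum.If_cases Int_def conj_commute)
      also have "card {j\<in>V. card (i \<inter> j) = l} = d"
        unfolding d_def V_def by (rule count_l) (use i lk k2 in \<open>auto simp: V_def\<close>)
      finally show ?thesis .
    qed
    have "(\<Sum>i\<in>V. \<Sum>j\<in>V. B i j) = (\<Sum>i\<in>V. (lam + real d) / (N * lam))" by (simp add: row)
    also have "\<dots> = N * ((lam + real d) / (N * lam))" using cV by simp
    also have "\<dots> = 1 + real d / lam" using Npos lampos by (simp add: field_simps)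
    finally show ?thesis .
  qed
  have th: "1 + real d / lam \<le> lovasz_theta (johnson_verts n k) (gen_johnson_adj {l})"
    using theta_ge[OF finV psd tr ed] val by (simp add: V_def johnson_lev)
  have kl: "0 < k - l" using lk k2 by simp
  have bin: "(k - l) * ((n - k) choose (k - l)) = (n - k) * ((n - k - 1) choose (k - l - 1))"
    by (rule times_binomial_minus1_eq[OF kl])
  have sym: "k choose (k - l) = k choose l" using lk k2 by (intro binomial_symmetric[symmetric]) simp
  have "real d / lam = real (k choose (k - l)) / (real (k - l) * real (l + 1)) * (real n - real k)"
  proof -
    have r1: "real (k - l) * real ((n - k) choose (k - l)) = (real n - real k) * real ((n - k - 1) choose (k - l - 1))"
    proof -
      have "real ((k - l) * ((n - k) choose (k - l))) = real ((n - k) * ((n - k - 1) choose (k - l - 1)))"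
        using bin by (simp only:)
      then have "real (k - l) * real ((n - k) choose (k - l)) = real (n - k) * real ((n - k - 1) choose (k - l - 1))"
        by (simp only: of_nat_mult)
      moreover have "real (n - k) = real n - real k" using k3 by (simp add: of_nat_diff)
      ultimately show ?thesis by simp
    qed
    have cpos: "real ((n - k - 1) choose (k - l - 1)) > 0" using k3 by simp
    have klpos: "real (k - l) > 0" using kl by simp
    have l1pos: "real (l + 1) > 0" by simp
    have "real d / lam = real (k choose l) * real ((n - k) choose (k - l)) / (real (l + 1) * real ((n - k - 1) choose (k - l - 1)))"
      unfolding d_def lam_def by (simp only: of_nat_mult)
    also have "\<dots> = real (k choose l) / (real (k - l) * real (l + 1)) * (real n - real k)"
      by (rule alg_helper[OF klpos cpos l1pos r1])
    finally show ?thesis unfolding sym .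
  qed
  then show ?thesis using th by simp
qed

lemma indep_case:
  fixes n k :: nat
  assumes k2: "k \<ge> 2" and nk: "n \<ge> k"
  shows "lovasz_theta (johnson_verts n k) (gen_johnson_adj {0})
           \<ge> real (k choose (k - 0)) / (real (k - 0) * real (0 + 1)) * (real n - real k)"
proof -
  define V where "V = lev n k"
  have finV: "finite V" by (simp add: V_def finite_lev)
  define m where "m = n div k"
  define blk where "blk = (\<lambda>i::nat. {i*k+1..i*k+k})"
  define S where "S = blk ` {..<m}"
  have "0 < n div k" by (subst div_greater_zero_iff) (use nk k2 in simp)
  then have m1: "m \<ge> 1" unfolding m_def by simp
  have mk: "m * k \<le> n" unfolding m_def by (simp add: div_times_less_eq_dividend)
  have blk_lev: "blk i \<in> V" if "i < m" for i
  proof -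
    have "i * k + k \<le> m * k" using that by (metis Suc_leI add.commute mult_Suc mult_le_mono1)
    then have "blk i \<subseteq> {1..n}" using mk by (auto simp: blk_def)
    moreover have "card (blk i) = k" by (simp add: blk_def)
    ultimately show ?thesis by (simp add: V_def lev_def)
  qed
  have disj: "blk i \<inter> blk i' = {}" if "i \<noteq> i'" for i i'
  proof -
    have "i * k + k \<le> i' * k \<or> i' * k + k \<le> i * k"
    proof (cases "i < i'")
      case True
      then have "Suc i \<le> i'" by simp
      then have "Suc i * k \<le> i' * k" by (rule mult_le_mono1)
      then show ?thesis by simp
    next
      case False
      then have "Suc i' \<le> i" using that by simp
      then have "Suc i' * k \<le> i * k" by (rule mult_le_mono1)
      then show ?thesis by simp
    qed
    then show ?thesis by (auto simp: blk_def)
  qed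
  have inj: "inj_on blk {..<m}"
  proof (rule inj_onI)
    fix i i' assume "blk i = blk i'"
    moreover have "blk i \<noteq> {}" using k2 by (simp add: blk_def)
    ultimately show "i = i'" using disj by blast
  qed
  have cS: "card S = m" unfolding S_def using card_image[OF inj] by simp
  have SV: "S \<subseteq> V" unfolding S_def using blk_lev by auto
  have Sdisj: "\<And>A B. A \<in> S \<Longrightarrow> B \<in> S \<Longrightarrow> A \<noteq> B \<Longrightarrow> A \<inter> B = {}"
  proof -
    fix A B assume "A \<in> S" "B \<in> S" "A \<noteq> B"
    then obtain i i' where "A = blk i" "B = blk i'" "i \<noteq> i'" unfolding S_def by auto
    then show "A \<inter> B = {}" using disj by simp
  qed
  have mpos: "real m > 0" using m1 by simp
  define B where "B = (\<lambda>(i::nat set) j. if i \<in> S \<and> j \<in> S then 1 / real m else 0)"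
  have VS: "{i\<in>V. i \<in> S} = S" using SV by auto
  have sumS: "(\<Sum>i\<in>V. if i \<in> S then f i else 0) = (\<Sum>i\<in>S. f i)" for f :: "nat set \<Rightarrow> real"
    using sum.inter_filter[OF finV, of f "\<lambda>i. i \<in> S"] VS by simp
  have quad: "(\<Sum>i\<in>V. \<Sum>j\<in>V. x i * B i j * x j) = (\<Sum>i\<in>S. x i)^2 / real m" for x :: "nat set \<Rightarrow> real"
  proof -
    have "(\<Sum>i\<in>V. \<Sum>j\<in>V. x i * B i j * x j) = (\<Sum>i\<in>V. if i \<in> S then (\<Sum>j\<in>V. if j \<in> S then x i * x j / real m else 0) else 0)"
      unfolding B_def by (intro sum.cong refl) (auto intro!: sum.cong)
    also have "\<dots> = (\<Sum>i\<in>S. \<Sum>j\<in>S. x i * x j / real m)" by (simp add: sumS)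
    also have "\<dots> = (\<Sum>i\<in>S. x i)^2 / real m"
      by (simp add: power2_eq_square sum_product sum_divide_distrib)
    finally show ?thesis .
  qed
  have psd: "psd_on V B"
    unfolding psd_on_def
  proof (intro conjI ballI allI)
    fix i j assume "i \<in> V" "j \<in> V"
    show "B i j = B j i" by (auto simp: B_def)
  next
    fix x :: "nat set \<Rightarrow> real"
    show "(\<Sum>i\<in>V. \<Sum>j\<in>V. x i * B i j * x j) \<ge> 0" unfolding quad using mpos by simp
  qed
  have tr: "(\<Sum>i\<in>V. B i i) = 1"
  proof -
    have "(\<Sum>i\<in>V. B i i) = (\<Sum>i\<in>V. if i \<in> S then 1 / real m else 0)" by (simp add: B_def)
    also have "\<dots> = (\<Sum>i\<in>S. 1 / real m)" by (rule sumS)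
    also have "\<dots> = 1" using cS mpos by simp
    finally show ?thesis .
  qed
  have ed: "\<forall>i\<in>V. \<forall>j\<in>V. gen_johnson_adj {0} i j \<longrightarrow> B i j = 0"
  proof (intro ballI impI)
    fix i j assume a: "gen_johnson_adj {0} i j"
    show "B i j = 0"
    proof (cases "i \<in> S \<and> j \<in> S")
      case True
      then have "i \<inter> j = {}" using Sdisj a by (auto simp: gen_johnson_adj_def)
      then show ?thesis using a by (simp add: gen_johnson_adj_def)
    next
      case False then show ?thesis unfolding B_def by (intro if_not_P)
    qed
  qed
  have val: "(\<Sum>i\<in>V. \<Sum>j\<in>V. B i j) = real m"
  proof -
    have "(\<Sum>i\<in>V. \<Sum>j\<in>V. B i j) = (\<Sum>i\<in>V. if i \<in> S then (\<Sum>j\<in>V. if j \<in> S then 1 / real m else 0) else 0)"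
      unfolding B_def by (intro sum.cong refl) auto
    also have "\<dots> = (\<Sum>i\<in>S. \<Sum>j\<in>S. 1 / real m)" by (simp add: sumS)
    also have "\<dots> = real m" using cS mpos by simp
    finally show ?thesis .
  qed
  have th: "real m \<le> lovasz_theta (johnson_verts n k) (gen_johnson_adj {0})"
    using theta_ge[OF finV psd tr ed] val by (simp add: V_def johnson_lev)
  have e1: "m * k + n mod k = n" unfolding m_def by (rule div_mult_mod_eq)
  have e2: "n mod k < k" using k2 by simp
  have "n < (m + 1) * k" using e1 e2 by simp
  then have "real n < (real m + 1) * real k" by (metis of_nat_1 of_nat_add of_nat_less_iff of_nat_mult)
  then have "(real n - real k) / real k \<le> real m" using k2 by (simp add: field_simps)
  then show ?thesis using th by simp
qed

theorem proposition3p3: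
  fixes n k l :: nat
  assumes "k \<ge> 2" and "n \<ge> k ^ 3 + 1" and "l \<le> k - 1"
  shows "lovasz_theta (johnson_verts n k) (gen_johnson_adj {l})
           \<ge> real (k choose (k - l)) / (real (k - l) * real (l + 1)) * (real n - real k)"
proof (cases "l = 0")
  case True
  have "k \<le> k ^ 3" using assms(1) by (simp add: power3_eq_cube)
  then have nk: "k \<le> n" using assms(2) by linarith
  show ?thesis using indep_case[OF assms(1) nk] True by simp
next
  case False
  then have "1 \<le> l" by simp
  then show ?thesis by (rule spectral_case[OF assms])
qed

end
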